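(* Let $\mathcal{D}$ be a distribution on $\mathbb{R}^d\times\{\pm1\}$ generated by the Massart noise model with noise bound $\eta<1/2$ and target $f(\mathbf{x})=\mathrm{sign}(\langle\mathbf{w}^*,\mathbf{x}\rangle)$, $\mathbf{w}^*\in\mathbb{S}^{d-1}$, whose marginal $\mathcal{D}_{\mathbf{x}}$ is $(U,R)$-bounded. Fix $\theta\in(0,\pi/2)$ and let $\widehat{\mathbf{w}}\in\mathbb{S}^{d-1}$ satisfy $\theta(\widehat{\mathbf{w}},\mathbf{w}^* )\in(\theta,\pi-\theta)$. If $0<\sigma\le\frac{R}{8U}\sqrt{1-2\eta}\,\sin\theta$, then $$\|\nabla_{\mathbf{w}}\mathcal{L}_\sigma(\widehat{\mathbf{w}})\|_2\ge\frac{R^2(1-2\eta)}{32U}.$$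
   Context: $\mathrm{sign}(t)=1$ if $t\ge0$, $-1$ otherwise; $\theta(\cdot,\cdot)\in[0,\pi]$ is the angle between vectors. Massart noise model: there is an unknown measurable $\eta(\cdot):\mathbb{R}^d\to[0,\eta]$; $(\mathbf{x},y)\sim\mathcal{D}$ is produced by drawing $\mathbf{x}\sim\mathcal{D}_{\mathbf{x}}$ and setting $y=f(\mathbf{x})$ with probability $1-\eta(\mathbf{x})$ and $y=-f(\mathbf{x})$ with probability $\eta(\mathbf{x})$. Sigmoid surrogate: $S_\sigma(t)=1/(1+e^{-t/\sigma})$ and, for $\mathbf{w}\ne0$, $\mathcal{L}_\sigma(\mathbf{w})=\mathbb{E}_{(\mathbf{x},y)\sim\mathcal{D}}\big[S_\sigma\big(-y\langle\mathbf{w},\mathbf{x}\rangle/\|\mathbf{w}\|_2\big)\big]$. $(U,R)$-bounded: $\mathcal{D}_{\mathbf{x}}$ is isotropic (zero mean, identity covariance) and for every 2-dimensional subspace $V$ the projection of $\mathcal{D}_{\mathbf{x}}$ onto $V$ has a density $\gamma_V$ with $\gamma_V(\mathbf{x})\ge1/U$ whenever $\|\mathbf{x}\|_2\le R$, and $\gamma_V(\mathbf{x})\le U$ for all $\mathbf{x}\in V$. *)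

theory Defs
  imports "HOL-Probability.Probability"
begin

definition psign :: "real \<Rightarrow> real" where
  "psign t = (if t \<ge> 0 then 1 else -1)"

definition vec_angle :: "'a::real_inner \<Rightarrow> 'a \<Rightarrow> real" where
  "vec_angle u v = arccos ((u \<bullet> v) / (norm u * norm v))"

definition sigmoid :: "real \<Rightarrow> real \<Rightarrow> real" where
  "sigmoid \<sigma> t = 1 / (1 + exp (- t / \<sigma>))"

definition sigmoid_loss :: "('a::euclidean_space \<times> real) measure \<Rightarrow> real \<Rightarrow> 'a \<Rightarrow> real" where
  "sigmoid_loss D \<sigma> w = (\<integral>p. sigmoid \<sigma> (- snd p * (w \<bullet> fst p) / norm w) \<partial>D)"

text \<open>Massart noise model: D is generated from the marginal Dx, target f and a
  measurable noise function eta(.) with values in [0, eta]: x ~ Dx, and y = f x with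
  probability 1 - eta(x), y = - f x with probability eta(x).\<close>
definition massart :: "('a::euclidean_space \<times> real) measure \<Rightarrow> 'a measure \<Rightarrow> ('a \<Rightarrow> real) \<Rightarrow> real \<Rightarrow> bool" where
  "massart D Dx f \<eta> \<longleftrightarrow>
     prob_space D \<and> sets D = sets borel \<and> prob_space Dx \<and> sets Dx = sets borel \<and>
     (\<exists>\<eta>f. \<eta>f \<in> borel_measurable borel \<and> (\<forall>x. 0 \<le> \<eta>f x \<and> \<eta>f x \<le> \<eta>) \<and>
        (\<forall>A \<in> sets borel. emeasure D A =
           (\<integral>\<^sup>+ x. ennreal ((1 - \<eta>f x) * indicator A (x, f x) + \<eta>f x * indicator A (x, - f x)) \<partial>Dx)))"

definition isotropic :: "'a::euclidean_space measure \<Rightarrow> bool" where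
  "isotropic Dx \<longleftrightarrow> prob_space Dx \<and> sets Dx = sets borel \<and>
     (\<forall>v. integrable Dx (\<lambda>x. x \<bullet> v) \<and> (\<integral>x. x \<bullet> v \<partial>Dx) = 0) \<and>
     (\<forall>u v. integrable Dx (\<lambda>x. (x \<bullet> u) * (x \<bullet> v)) \<and> (\<integral>x. (x \<bullet> u) * (x \<bullet> v) \<partial>Dx) = u \<bullet> v)"

text \<open>A 2-dimensional subspace V is described by an orthonormal basis
  u1, u2; the projection onto V is identified isometrically with the map
  x \<mapsto> (x.u1, x.u2) into R^2 (Lebesgue measure lborel on real \<times> real).\<close>
definition UR_bounded :: "'a::euclidean_space measure \<Rightarrow> real \<Rightarrow> real \<Rightarrow> bool" where
  "UR_bounded Dx U R \<longleftrightarrow> isotropic Dx \<and>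
     (\<forall>u1 u2. norm u1 = 1 \<longrightarrow> norm u2 = 1 \<longrightarrow> u1 \<bullet> u2 = 0 \<longrightarrow>
        (\<exists>\<gamma> :: real \<times> real \<Rightarrow> real. \<gamma> \<in> borel_measurable borel \<and>
           distr Dx lborel (\<lambda>x. (x \<bullet> u1, x \<bullet> u2)) = density lborel (\<lambda>z. ennreal (\<gamma> z)) \<and>
           (\<forall>z. norm z \<le> R \<longrightarrow> \<gamma> z \<ge> 1 / U) \<and> (\<forall>z. 0 \<le> \<gamma> z \<and> \<gamma> z \<le> U)))"

end

theory Submission
  imports Defs
begin


lemma massart_nn:
  fixes D :: "('a::euclidean_space \<times> real) measure" and g :: "'a \<times> real \<Rightarrow> ennreal"
  assumes sD: "sets D = sets borel" and sDx: "sets Dx = sets borel"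
  and em: "\<And>A. A \<in> sets borel \<Longrightarrow> emeasure D A = (\<integral>\<^sup>+ x. ennreal ((1 - e x) * indicator A (x, f x) + e x * indicator A (x, - f x)) \<partial>Dx)"
  and e: "e \<in> borel_measurable borel" "\<And>x. 0 \<le> e x" "\<And>x. e x \<le> 1"
  and f: "f \<in> borel_measurable borel"
  and g: "g \<in> borel_measurable D"
  shows "(\<integral>\<^sup>+p. g p \<partial>D) = (\<integral>\<^sup>+x. ennreal (1 - e x) * g (x, f x) + ennreal (e x) * g (x, - f x) \<partial>Dx)"
  using g
proof -
  have m1: "(\<lambda>x. (x, f x)) \<in> measurable Dx D" and m2: "(\<lambda>x. (x, - f x)) \<in> measurable Dx D"
    unfolding measurable_cong_sets[OF sDx sD] borel_prod[symmetric]
    using f by measurable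
  have spDx: "space Dx = UNIV" using sets_eq_imp_space_eq[OF sDx] by simp
  have me: "(\<lambda>x. ennreal (1 - e x)) \<in> borel_measurable Dx" "(\<lambda>x. ennreal (e x)) \<in> borel_measurable Dx"
    unfolding measurable_cong_sets[OF sDx refl] using e(1) by measurable
  show ?thesis using g
proof (induction rule: borel_measurable_induct)
  case (cong f1 f2)
  have sp: "space D = UNIV" using sets_eq_imp_space_eq[OF sD] by simp
  hence "f1 = f2" using cong by auto
  then show ?case using cong by simp
next
  case (set A)
  have A: "A \<in> sets borel" using set sD by simp
  have "(\<integral>\<^sup>+p. indicator A p \<partial>D) = emeasure D A" using set by simp
  also have "\<dots> = (\<integral>\<^sup>+ x. ennreal ((1 - e x) * indicator A (x, f x) + e x * indicator A (x, - f x)) \<partial>Dx)"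
    using em[OF A] .
  also have "\<dots> = (\<integral>\<^sup>+x. ennreal (1 - e x) * indicator A (x, f x) + ennreal (e x) * indicator A (x, - f x) \<partial>Dx)"
    apply (rule nn_integral_cong)
    using e(2,3)
    by (simp add: ennreal_plus[symmetric] ennreal_mult[symmetric] ennreal_indicator[symmetric] del: ennreal_plus)
  finally show ?case .
next
  case (mult u c)
  have mu1: "(\<lambda>x. u (x, f x)) \<in> borel_measurable Dx" using measurable_comp[OF m1 mult(2)] by (simp add: comp_def)
  have mu2: "(\<lambda>x. u (x, - f x)) \<in> borel_measurable Dx" using measurable_comp[OF m2 mult(2)] by (simp add: comp_def)
  have "(\<integral>\<^sup>+p. c * u p \<partial>D) = c * (\<integral>\<^sup>+p. u p \<partial>D)" using mult(2) by (rule nn_integral_cmult)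
  also have "\<dots> = c * (\<integral>\<^sup>+x. ennreal (1 - e x) * u (x, f x) + ennreal (e x) * u (x, - f x) \<partial>Dx)" using mult(4) by simp
  also have "\<dots> = (\<integral>\<^sup>+x. c * (ennreal (1 - e x) * u (x, f x) + ennreal (e x) * u (x, - f x)) \<partial>Dx)"
    by (rule nn_integral_cmult[symmetric]) (use mu1 mu2 me in measurable)
  also have "\<dots> = (\<integral>\<^sup>+x. ennreal (1 - e x) * (c * u (x, f x)) + ennreal (e x) * (c * u (x, - f x)) \<partial>Dx)"
    by (rule nn_integral_cong) (simp add: algebra_simps)
  finally show ?case .
next
  case (add u v)
  have mu1: "(\<lambda>x. u (x, f x)) \<in> borel_measurable Dx" using measurable_comp[OF m1 \<open>u \<in> borel_measurable D\<close>] by (simp add: comp_def)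
  have mu2: "(\<lambda>x. u (x, - f x)) \<in> borel_measurable Dx" using measurable_comp[OF m2 \<open>u \<in> borel_measurable D\<close>] by (simp add: comp_def)
  have mv1: "(\<lambda>x. v (x, f x)) \<in> borel_measurable Dx" using measurable_comp[OF m1 \<open>v \<in> borel_measurable D\<close>] by (simp add: comp_def)
  have mv2: "(\<lambda>x. v (x, - f x)) \<in> borel_measurable Dx" using measurable_comp[OF m2 \<open>v \<in> borel_measurable D\<close>] by (simp add: comp_def)
  have "(\<integral>\<^sup>+p. v p + u p \<partial>D) = (\<integral>\<^sup>+p. v p \<partial>D) + (\<integral>\<^sup>+p. u p \<partial>D)"
    by (intro nn_integral_add) fact+
  also have "\<dots> = (\<integral>\<^sup>+x. ennreal (1 - e x) * v (x, f x) + ennreal (e x) * v (x, - f x) \<partial>Dx) + (\<integral>\<^sup>+x. ennreal (1 - e x) * u (x, f x) + ennreal (e x) * u (x, - f x) \<partial>Dx)"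
    using add.IH by simp
  also have "\<dots> = (\<integral>\<^sup>+x. (ennreal (1 - e x) * v (x, f x) + ennreal (e x) * v (x, - f x)) + (ennreal (1 - e x) * u (x, f x) + ennreal (e x) * u (x, - f x)) \<partial>Dx)"
    by (rule nn_integral_add[symmetric]; use mu1 mu2 mv1 mv2 me in measurable)
  also have "\<dots> = (\<integral>\<^sup>+x. ennreal (1 - e x) * (v (x, f x) + u (x, f x)) + ennreal (e x) * (v (x, - f x) + u (x, - f x)) \<partial>Dx)"
    by (rule nn_integral_cong) (simp add: algebra_simps)
  finally show ?case .
next
  case (seq U)
  have mu1: "\<And>i. (\<lambda>x. U i (x, f x)) \<in> borel_measurable Dx" using measurable_comp[OF m1 \<open>\<And>i. U i \<in> borel_measurable D\<close>] by (simp add: comp_def)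
  have mu2: "\<And>i. (\<lambda>x. U i (x, - f x)) \<in> borel_measurable Dx" using measurable_comp[OF m2 \<open>\<And>i. U i \<in> borel_measurable D\<close>] by (simp add: comp_def)
  have "(\<integral>\<^sup>+p. (SUP i. U i) p \<partial>D) = (\<integral>\<^sup>+p. (SUP i. U i p) \<partial>D)" by (simp add: image_comp)
  also have "\<dots> = (SUP i. (\<integral>\<^sup>+p. U i p \<partial>D))"
    by (rule nn_integral_monotone_convergence_SUP[OF \<open>incseq U\<close> \<open>\<And>i. U i \<in> borel_measurable D\<close>])
  also have "\<dots> = (SUP i. (\<integral>\<^sup>+x. ennreal (1 - e x) * U i (x, f x) + ennreal (e x) * U i (x, - f x) \<partial>Dx))"
    using seq.IH by simp
  also have "\<dots> = (\<integral>\<^sup>+x. (SUP i. ennreal (1 - e x) * U i (x, f x) + ennreal (e x) * U i (x, - f x)) \<partial>Dx)"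
  proof (rule nn_integral_monotone_convergence_SUP[symmetric])
    show "incseq (\<lambda>i x. ennreal (1 - e x) * U i (x, f x) + ennreal (e x) * U i (x, - f x))"
      using \<open>incseq U\<close> unfolding incseq_def le_fun_def by (auto intro!: add_mono mult_left_mono)
    show "\<And>i. (\<lambda>x. ennreal (1 - e x) * U i (x, f x) + ennreal (e x) * U i (x, - f x)) \<in> borel_measurable Dx"
      using mu1 mu2 me by measurable
  qed
  also have "\<dots> = (\<integral>\<^sup>+x. ennreal (1 - e x) * (SUP i. U i) (x, f x) + ennreal (e x) * (SUP i. U i) (x, - f x) \<partial>Dx)"
  proof (rule nn_integral_cong)
    fix x
    have i1: "incseq (\<lambda>i. U i (x, f x))" "incseq (\<lambda>i. U i (x, - f x))"
      using \<open>incseq U\<close> unfolding incseq_def le_fun_def by auto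
    have "(SUP i. ennreal (1 - e x) * U i (x, f x) + ennreal (e x) * U i (x, - f x))
       = (SUP i. ennreal (1 - e x) * U i (x, f x)) + (SUP i. ennreal (e x) * U i (x, - f x))"
      by (rule ennreal_SUP_add) (use i1 in \<open>auto simp: incseq_def intro: mult_left_mono\<close>)
    also have "\<dots> = ennreal (1 - e x) * (SUP i. U i (x, f x)) + ennreal (e x) * (SUP i. U i (x, - f x))"
      by (simp add: SUP_mult_left_ennreal)
    finally show "(SUP i. ennreal (1 - e x) * U i (x, f x) + ennreal (e x) * U i (x, - f x)) = ennreal (1 - e x) * (SUP i. U i) (x, f x) + ennreal (e x) * (SUP i. U i) (x, - f x)"
      by (simp add: image_comp)
  qed
  finally show ?case .
qed
qed



definition dsg :: "real \<Rightarrow> real \<Rightarrow> real" where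
  "dsg \<sigma> t = sigmoid \<sigma> t * (1 - sigmoid \<sigma> t) / \<sigma>"

lemma exp_sum_pos: "0 < exp (a::real) + 2 + exp b"
  using exp_gt_zero[of a] exp_gt_zero[of b] by linarith

lemma sig_pos: "0 < sigmoid \<sigma> t" and sig_lt1: "sigmoid \<sigma> t < 1"
proof -
  have g: "0 < 1 / (1 + exp x) \<and> 1 / (1 + exp x) < 1" for x :: real
  proof -
    have "1 < 1 + exp x" "0 < 1 + exp x" using exp_gt_zero[of x] by linarith+
    thus ?thesis by (simp add: divide_less_eq)
  qed
  show "0 < sigmoid \<sigma> t" "sigmoid \<sigma> t < 1" unfolding sigmoid_def using g[of "- t / \<sigma>"] by auto
qed

lemma recip_aux:
  fixes a b :: real assumes ab: "a * b = 1" and a: "a > 0" and b: "b > 0"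
  shows "1 / (1 + a) = 1 - 1 / (1 + b)"
proof -
  have "1 + b = (1 + a) * b" using ab by (simp add: algebra_simps)
  moreover have "1 + a > 0" "1 + b > 0" using a b by auto
  ultimately show ?thesis by (simp add: field_simps)
qed

lemma recip_aux2:
  fixes a b \<sigma> :: real assumes ab: "a * b = 1" and a: "a > 0" and b: "b > 0" and s: "\<sigma> > 0"
  shows "b / (\<sigma> * (1 + b)^2) = 1 / (\<sigma> * (a + 2 + b))"
proof -
  have e: "(1 + b)^2 = b * (a + 2 + b)" using ab by (simp add: power2_eq_square algebra_simps)
  have "\<sigma> * (b * (a + 2 + b)) = b * (\<sigma> * (a + 2 + b))" by (simp add: ac_simps)
  thus ?thesis unfolding e using b by (simp add: nonzero_divide_mult_cancel_left)
qed

lemma sig_neg: "sigmoid \<sigma> (- t) = 1 - sigmoid \<sigma> t"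
proof -
  have e: "exp (t / \<sigma>) * exp (- t / \<sigma>) = 1" by (simp add: exp_add[symmetric])
  have p1: "1 + exp (t/\<sigma>) > 0" "1 + exp (- t/\<sigma>) > 0" by (auto intro: add_pos_pos)
  have "1 / (1 + exp (t / \<sigma>)) = 1 - 1 / (1 + exp (- t / \<sigma>))"
    by (rule recip_aux[OF e]) auto
  thus ?thesis unfolding sigmoid_def by simp
qed

lemma sig_deriv_aux:
  fixes E \<sigma> :: real assumes E: "E > 0" and s: "\<sigma> \<noteq> 0"
  shows "- ((E * (- 1 / \<sigma>)) * inverse ((1 + E) ^ Suc (Suc 0))) = (1 / (1 + E)) * (1 - 1 / (1 + E)) / \<sigma>"
proof -
  have p: "1 + E > 0" using E by simp
  have "1 - 1 / (1 + E) = E / (1 + E)" using p by (simp add: field_simps)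
  thus ?thesis using p s by (simp add: field_simps power2_eq_square)
qed

lemma sig_deriv: "\<sigma> \<noteq> 0 \<Longrightarrow> (sigmoid \<sigma> has_real_derivative dsg \<sigma> t) (at t)"
proof -
  assume s: "\<sigma> \<noteq> 0"
  have d1: "((\<lambda>t. - t / \<sigma>) has_real_derivative (- 1 / \<sigma>)) (at t)"
    using DERIV_cdivide[OF DERIV_minus[OF DERIV_ident], where c=\<sigma>] by simp
  have d2: "((\<lambda>t. exp (- t / \<sigma>)) has_real_derivative exp (- t / \<sigma>) * (- 1 / \<sigma>)) (at t)"
    by (rule DERIV_chain2[OF DERIV_exp d1])
  have d3: "((\<lambda>t. 1 + exp (- t / \<sigma>)) has_real_derivative 0 + exp (- t / \<sigma>) * (- 1 / \<sigma>)) (at t)"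
    by (rule DERIV_add[OF DERIV_const d2])
  have nz: "1 + exp (- t / \<sigma>) \<noteq> 0" using exp_gt_zero[of "- t / \<sigma>"] by linarith
  note d4 = DERIV_inverse_fun[OF d3 nz]
  have eq: "- ((0 + exp (- t / \<sigma>) * (- 1 / \<sigma>)) * inverse ((1 + exp (- t / \<sigma>)) ^ Suc (Suc 0))) = dsg \<sigma> t"
    unfolding dsg_def sigmoid_def using sig_deriv_aux[OF exp_gt_zero s] by simp
  have fs: "sigmoid \<sigma> = (\<lambda>t. inverse (1 + exp (- t / \<sigma>)))"
    by (simp add: sigmoid_def[abs_def] divide_inverse)
  show ?thesis using d4 unfolding eq fs .
qed

lemma dsg_deriv: "\<sigma> \<noteq> 0 \<Longrightarrow> (dsg \<sigma> has_real_derivative (dsg \<sigma> t * (1 - 2 * sigmoid \<sigma> t) / \<sigma>)) (at t)"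
proof -
  assume s: "\<sigma> \<noteq> 0"
  have d: "(sigmoid \<sigma> has_real_derivative dsg \<sigma> t) (at t)" using sig_deriv s .
  have d2: "((\<lambda>t. 1 - sigmoid \<sigma> t) has_real_derivative 0 - dsg \<sigma> t) (at t)" by (rule DERIV_diff[OF DERIV_const d])
  note d4 = DERIV_cdivide[OF DERIV_mult[OF d d2], of \<sigma>]
  have fd: "dsg \<sigma> = (\<lambda>t. sigmoid \<sigma> t * (1 - sigmoid \<sigma> t) / \<sigma>)" by (simp add: dsg_def[abs_def])
  have eq: "(dsg \<sigma> t * (1 - sigmoid \<sigma> t) + (0 - dsg \<sigma> t) * sigmoid \<sigma> t) / \<sigma> = dsg \<sigma> t * (1 - 2 * sigmoid \<sigma> t) / \<sigma>"
    by (simp add: algebra_simps)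
  define V where "V = dsg \<sigma> t * (1 - 2 * sigmoid \<sigma> t) / \<sigma>"
  have "((\<lambda>t. sigmoid \<sigma> t * (1 - sigmoid \<sigma> t) / \<sigma>) has_real_derivative V) (at t)"
    using d4 unfolding eq V_def .
  thus ?thesis by (simp only: V_def fd)
qed

lemma sig_prod_le: "sigmoid \<sigma> t * (1 - sigmoid \<sigma> t) \<le> 1/4"
proof -
  have "0 \<le> (sigmoid \<sigma> t - 1/2)^2" by simp
  thus ?thesis by (simp add: power2_eq_square algebra_simps)
qed

lemma dsg_nonneg: "\<sigma> > 0 \<Longrightarrow> 0 \<le> dsg \<sigma> t"
  unfolding dsg_def using sig_pos[of \<sigma> t] sig_lt1[of \<sigma> t] by simp

lemma dsg_le: "\<sigma> > 0 \<Longrightarrow> dsg \<sigma> t \<le> 1 / (4 * \<sigma>)"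
proof -
  assume s: "\<sigma> > 0"
  have "sigmoid \<sigma> t * (1 - sigmoid \<sigma> t) / \<sigma> \<le> (1/4) / \<sigma>"
    by (rule divide_right_mono[OF sig_prod_le]) (use s in simp)
  thus ?thesis unfolding dsg_def by simp
qed

lemma dsg_even: "dsg \<sigma> (- t) = dsg \<sigma> t"
  unfolding dsg_def sig_neg by (simp add: algebra_simps)

lemma dsg_lip:
  assumes s: "\<sigma> > 0"
  shows "\<bar>dsg \<sigma> a - dsg \<sigma> b\<bar> \<le> \<bar>a - b\<bar> / \<sigma>^2"
proof -
  have bd: "\<bar>dsg \<sigma> t * (1 - 2 * sigmoid \<sigma> t) / \<sigma>\<bar> \<le> 1 / \<sigma>^2" for t
  proof -
    have "\<bar>1 - 2 * sigmoid \<sigma> t\<bar> \<le> 1" using sig_pos[of \<sigma> t] sig_lt1[of \<sigma> t] by simp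
    hence "\<bar>dsg \<sigma> t\<bar> * \<bar>1 - 2 * sigmoid \<sigma> t\<bar> \<le> 1 / (4 * \<sigma>) * 1"
      using dsg_nonneg[OF s, of t] dsg_le[OF s, of t] s by (intro mult_mono) auto
    hence "\<bar>dsg \<sigma> t * (1 - 2 * sigmoid \<sigma> t)\<bar> \<le> 1 / (4 * \<sigma>) * 1" by (simp add: abs_mult)
    also have "\<dots> \<le> 1 / \<sigma>" using s by (simp add: divide_simps)
    finally show ?thesis using s by (simp add: abs_div power2_eq_square divide_simps)
  qed
  have gen: "\<bar>dsg \<sigma> y - dsg \<sigma> x\<bar> \<le> (y - x) / \<sigma>^2" if xy: "x < y" for x y
  proof -
    obtain z where "x < z" "z < y" "dsg \<sigma> y - dsg \<sigma> x = (y - x) * (dsg \<sigma> z * (1 - 2 * sigmoid \<sigma> z) / \<sigma>)"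
      using MVT2[OF xy, of "dsg \<sigma>" "\<lambda>t. dsg \<sigma> t * (1 - 2 * sigmoid \<sigma> t) / \<sigma>"] dsg_deriv s by force
    hence "\<bar>dsg \<sigma> y - dsg \<sigma> x\<bar> = (y - x) * \<bar>dsg \<sigma> z * (1 - 2 * sigmoid \<sigma> z) / \<sigma>\<bar>" using xy by (simp add: abs_mult)
    also have "\<dots> \<le> (y - x) * (1 / \<sigma>^2)" using bd[of z] xy by (intro mult_left_mono) auto
    finally show ?thesis by simp
  qed
  consider "a < b" | "a = b" | "b < a" by linarith
  thus ?thesis
  proof cases
    case 1 thus ?thesis using gen[OF 1] by (simp add: abs_minus_commute)
  next
    case 3 thus ?thesis using gen[OF 3] by simp
  qed simp
qed

lemma sig_taylor:
  assumes s: "\<sigma> > 0"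
  shows "\<bar>sigmoid \<sigma> b - sigmoid \<sigma> a - dsg \<sigma> a * (b - a)\<bar> \<le> (b - a)^2 / \<sigma>^2"
proof -
  have gen: "\<bar>sigmoid \<sigma> b - sigmoid \<sigma> a - dsg \<sigma> a * (b - a)\<bar> \<le> (b - a)^2 / \<sigma>^2"
    if xy: "min a b < max a b" for a b
  proof -
    obtain z where z: "min a b < z" "z < max a b"
      "sigmoid \<sigma> (max a b) - sigmoid \<sigma> (min a b) = (max a b - min a b) * dsg \<sigma> z"
      using MVT2[OF xy, of "sigmoid \<sigma>" "dsg \<sigma>"] sig_deriv s by force
    have "sigmoid \<sigma> b - sigmoid \<sigma> a = (b - a) * dsg \<sigma> z"
      using z(3) by (cases "a \<le> b") (auto simp: min_def max_def algebra_simps)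
    hence "\<bar>sigmoid \<sigma> b - sigmoid \<sigma> a - dsg \<sigma> a * (b - a)\<bar> = \<bar>b - a\<bar> * \<bar>dsg \<sigma> z - dsg \<sigma> a\<bar>"
      by (simp add: algebra_simps abs_mult[symmetric])
    also have "\<dots> \<le> \<bar>b - a\<bar> * (\<bar>z - a\<bar> / \<sigma>^2)" by (intro mult_left_mono dsg_lip s) simp
    also have "\<dots> \<le> \<bar>b - a\<bar> * (\<bar>b - a\<bar> / \<sigma>^2)"
      using z(1,2) by (intro mult_left_mono divide_right_mono) (auto simp: min_def max_def split: if_splits)
    finally show ?thesis by (simp add: power2_eq_square)
  qed
  show ?thesis
  proof (cases "a = b")
    case False thus ?thesis using gen[of a b] by (simp add: min_def max_def)
  qed simp
qed

lemma dsg_formula: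
  assumes s: "\<sigma> > 0"
  shows "dsg \<sigma> t = 1 / (\<sigma> * (exp (t/\<sigma>) + 2 + exp (- t/\<sigma>)))"
proof -
  have e: "exp (t / \<sigma>) * exp (- t / \<sigma>) = 1" by (simp add: exp_add[symmetric])
  have p: "1 + exp (- t/\<sigma>) > 0" by (auto intro: add_pos_pos)
  have q: "exp (t/\<sigma>) + 2 + exp (- t/\<sigma>) > 0" by (rule exp_sum_pos)
  have "dsg \<sigma> t = exp (- t/\<sigma>) / (\<sigma> * (1 + exp (- t/\<sigma>))^2)"
    unfolding dsg_def sigmoid_def using p s by (simp add: field_simps power2_eq_square)
  also have "\<dots> = 1 / (\<sigma> * (exp (t/\<sigma>) + 2 + exp (- t/\<sigma>)))"
    by (rule recip_aux2[OF _ _ _ s]) (use e in auto)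
  finally show ?thesis .
qed

lemma dsg_lower:
  assumes s: "\<sigma> > 0" and t: "\<bar>t\<bar> \<le> \<sigma>"
  shows "dsg \<sigma> t \<ge> 1 / (\<sigma> * (261/50))"
proof -
  define u where "u = t / \<sigma>"
  have u: "-1 \<le> u" "u \<le> 1" using t s unfolding u_def by (auto simp: divide_simps abs_le_iff)
  have "0 \<le> (exp 1 - exp u) * (1 - exp (-1 - u))"
    using u by (intro mult_nonneg_nonneg) auto
  hence "exp u + exp (- u) \<le> exp 1 + exp (-1)"
    by (simp add: algebra_simps exp_diff exp_minus field_simps)
  moreover have "exp 1 < (272/100::real)" by (rule e_less_272)
  moreover have "exp (-1::real) \<le> 1/2"
  proof -
    have "2 \<le> exp (1::real)" using exp_ge_add_one_self[of 1] by simp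
    thus ?thesis by (simp add: exp_minus divide_simps)
  qed
  ultimately have le: "exp u + 2 + exp (- u) \<le> 261/50" by simp
  have pos: "0 < exp u + 2 + exp (- u)" by (rule exp_sum_pos)
  have "dsg \<sigma> t = 1 / (\<sigma> * (exp u + 2 + exp (- u)))"
    unfolding dsg_formula[OF s] u_def by simp
  also have "\<dots> \<ge> 1 / (\<sigma> * (261/50))"
    using le pos s by (intro divide_left_mono mult_left_mono mult_pos_pos) auto
  finally show ?thesis .
qed

lemma dsg_upper:
  assumes s: "\<sigma> > 0"
  shows "dsg \<sigma> t \<le> exp (- \<bar>t\<bar> / \<sigma>) / \<sigma>"
proof -
  have pos: "0 < exp (t/\<sigma>) + 2 + exp (- t/\<sigma>)" by (rule exp_sum_pos)
  have "exp (\<bar>t\<bar> / \<sigma>) \<le> exp (t/\<sigma>) + 2 + exp (- t/\<sigma>)"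
    by (cases "t \<ge> 0") (auto intro: add_nonneg_nonneg add_increasing2 add_increasing)
  hence "1 / (\<sigma> * (exp (t/\<sigma>) + 2 + exp (- t/\<sigma>))) \<le> 1 / (\<sigma> * exp (\<bar>t\<bar> / \<sigma>))"
    using pos s by (intro divide_left_mono mult_left_mono mult_pos_pos) auto
  also have "\<dots> = exp (- \<bar>t\<bar> / \<sigma>) / \<sigma>" by (simp add: exp_minus divide_simps)
  finally show ?thesis unfolding dsg_formula[OF s] .
qed



lemma half_exp_integral:
  fixes \<sigma> c :: real assumes s: "\<sigma> > 0" and c: "\<bar>c\<bar> = \<sigma>"
  and S: "\<And>v. c * v \<in> S \<longleftrightarrow> 0 \<le> v" and Sm: "S \<in> sets borel"
  shows "(\<integral>\<^sup>+ t. ennreal (exp (- \<bar>t\<bar> / \<sigma>) / \<sigma> * t^2) * indicator S t \<partial>lborel) = ennreal (2 * \<sigma>^2)"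
proof -
  have c0: "c \<noteq> 0" using c s by auto
  have "(\<integral>\<^sup>+ t. ennreal (exp (- \<bar>t\<bar> / \<sigma>) / \<sigma> * t^2) * indicator S t \<partial>lborel)
      = \<bar>c\<bar> * (\<integral>\<^sup>+ v. ennreal (exp (- \<bar>0 + c * v\<bar> / \<sigma>) / \<sigma> * (0 + c * v)^2) * indicator S (0 + c * v) \<partial>lborel)"
  proof (rule nn_integral_real_affine[OF _ c0])
    have "(\<lambda>t. exp (- \<bar>t\<bar> / \<sigma>) / \<sigma> * t^2) \<in> borel_measurable borel" by measurable
    moreover have "indicator S \<in> borel_measurable borel" using Sm by simp
    ultimately show "(\<lambda>t. ennreal (exp (- \<bar>t\<bar> / \<sigma>) / \<sigma> * t^2) * indicator S t) \<in> borel_measurable borel"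
      by (intro borel_measurable_times_ennreal) auto
  qed
  also have "\<dots> = ennreal \<sigma> * (\<integral>\<^sup>+ v. ennreal \<sigma> * (ennreal (v^2 * exp (- v)) * indicator {0..} v) \<partial>lborel)"
  proof -
    have "ennreal (exp (- \<bar>0 + c * v\<bar> / \<sigma>) / \<sigma> * (0 + c * v)^2) * indicator S (0 + c * v)
        = ennreal \<sigma> * (ennreal (v^2 * exp (- v)) * indicator {0..} v)" for v
    proof (cases "0 \<le> v")
      case True
      have "\<bar>c * v\<bar> / \<sigma> = v" using True c s by (simp add: abs_mult)
      moreover have "(c * v)^2 = \<sigma>^2 * v^2"
      proof -
        have "c^2 = \<sigma>^2" using c by (metis power2_abs)
        thus ?thesis by (simp add: power_mult_distrib)
      qed
      ultimately have e: "exp (- \<bar>0 + c * v\<bar> / \<sigma>) / \<sigma> * (0 + c * v)^2 = exp (- v) / \<sigma> * (\<sigma>^2 * v^2)"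
        by (simp only: add_0_left minus_divide_left[symmetric])
      have "exp (- v) / \<sigma> * (\<sigma>^2 * v^2) = \<sigma> * (v^2 * exp (- v))"
        using s by (simp add: power2_eq_square field_simps)
      note e = e[unfolded this]
      moreover have "ennreal (\<sigma> * (v^2 * exp (- v))) = ennreal \<sigma> * ennreal (v^2 * exp (- v))"
        using s True by (intro ennreal_mult) auto
      ultimately show ?thesis using True S[of v] by simp
    next
      case False thus ?thesis using S[of v] by simp
    qed
    thus ?thesis using c by simp
  qed
  also have "\<dots> = ennreal \<sigma> * (ennreal \<sigma> * (\<integral>\<^sup>+ v. ennreal (v^2 * exp (- v)) * indicator {0..} v \<partial>lborel))"
    by (subst nn_integral_cmult) auto
  also have "\<dots> = ennreal (2 * \<sigma>^2)"
  proof -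
    have "ennreal \<sigma> * (ennreal \<sigma> * ennreal 2) = ennreal (2 * \<sigma>^2)"
      using s by (simp add: ennreal_mult'' power2_eq_square mult_ac)
    thus ?thesis by (simp add: nn_intergal_power_times_exp_Ici)
  qed
  finally show ?thesis .
qed

lemma exp_sq_integral:
  fixes \<sigma> :: real assumes s: "\<sigma> > 0"
  shows "(\<integral>\<^sup>+ t. ennreal (exp (- \<bar>t\<bar> / \<sigma>) / \<sigma> * t^2) \<partial>lborel) \<le> ennreal (4 * \<sigma>^2)"
proof -
  let ?F = "\<lambda>t. ennreal (exp (- \<bar>t\<bar> / \<sigma>) / \<sigma> * t^2)"
  have "(\<integral>\<^sup>+ t. ?F t \<partial>lborel) \<le> (\<integral>\<^sup>+ t. ?F t * indicator {0..} t + ?F t * indicator {..0} t \<partial>lborel)"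
    by (rule nn_integral_mono) (auto split: split_indicator)
  also have "\<dots> = (\<integral>\<^sup>+ t. ?F t * indicator {0..} t \<partial>lborel) + (\<integral>\<^sup>+ t. ?F t * indicator {..0} t \<partial>lborel)"
    by (rule nn_integral_add) auto
  also have "\<dots> = ennreal (2 * \<sigma>^2) + ennreal (2 * \<sigma>^2)"
    using half_exp_integral[OF s, of \<sigma> "{0..}"] half_exp_integral[OF s, of "- \<sigma>" "{..0}"] s
    by (simp add: zero_le_mult_iff mult_le_0_iff)
  also have "\<dots> = ennreal (4 * \<sigma>^2)" by (simp add: ennreal_plus[symmetric] del: ennreal_plus)
  finally show ?thesis .
qed



lemma quad_deriv:
  fixes F :: "'a::real_normed_vector \<Rightarrow> real"
  assumes bl: "bounded_linear Lf" and q: "\<And>v. \<bar>F v - F v0 - Lf (v - v0)\<bar> \<le> K * (norm (v - v0))^2"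
  shows "(F has_derivative Lf) (at v0)"
  unfolding has_derivative_at_within
proof (intro conjI bl, rule Lim_null_comparison)
  show "eventually (\<lambda>y. norm ((F y - F v0 - Lf (y - v0)) /\<^sub>R norm (y - v0)) \<le> K * norm (y - v0)) (at v0)"
  proof (intro always_eventually allI)
    fix y
    show "norm ((F y - F v0 - Lf (y - v0)) /\<^sub>R norm (y - v0)) \<le> K * norm (y - v0)"
    proof (cases "y = v0")
      case True thus ?thesis by simp
    next
      case False
      hence n: "norm (y - v0) > 0" by simp
      have "norm ((F y - F v0 - Lf (y - v0)) /\<^sub>R norm (y - v0)) = \<bar>F y - F v0 - Lf (y - v0)\<bar> / norm (y - v0)"
        by (simp add: abs_mult divide_inverse mult.commute)
      also have "\<dots> \<le> K * (norm (y - v0))^2 / norm (y - v0)"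
        using q[of y] n by (intro divide_right_mono) auto
      also have "\<dots> = K * norm (y - v0)" using n by (simp add: power2_eq_square)
      finally show ?thesis .
    qed
  qed
  have "((\<lambda>y. K * norm (y - v0)) \<longlongrightarrow> K * norm (v0 - v0)) (at v0)"
    by (intro tendsto_intros)
  thus "((\<lambda>y. K * norm (y - v0)) \<longlongrightarrow> 0) (at v0)" by simp
qed

lemma Phi_deriv:
  fixes M :: "'a::euclidean_space measure" and a b :: "'a \<Rightarrow> real"
  assumes P: "prob_space M" and sM: "sets M = sets borel"
  and ii1: "\<And>u v. integrable M (\<lambda>x. (x \<bullet> u) * (x \<bullet> v))"
  and ii2: "\<And>u. (\<integral>x. (x \<bullet> u) * (x \<bullet> u) \<partial>M) = u \<bullet> u"
  and ii3: "\<And>v. integrable M (\<lambda>x. x \<bullet> v)"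
  and am: "a \<in> borel_measurable borel" "\<And>x. 0 \<le> a x" "\<And>x. a x \<le> 1"
  and bm: "b \<in> borel_measurable borel" "\<And>x. \<bar>b x\<bar> = 1"
  and s: "\<sigma> > 0"
  shows "((\<lambda>v. \<integral>x. a x * sigmoid \<sigma> (b x * (v \<bullet> x)) \<partial>M) has_derivative
          (\<lambda>h. (\<Sum>i\<in>Basis. (\<integral>x. a x * dsg \<sigma> (b x * (v0 \<bullet> x)) * b x * (x \<bullet> i) \<partial>M) *\<^sub>R i) \<bullet> h)) (at v0)"
    and "(\<Sum>i\<in>Basis. (\<integral>x. a x * dsg \<sigma> (b x * (v0 \<bullet> x)) * b x * (x \<bullet> i) \<partial>M) *\<^sub>R i) \<bullet> h
          = (\<integral>x. a x * dsg \<sigma> (b x * (v0 \<bullet> x)) * b x * (x \<bullet> h) \<partial>M)"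
proof -
  interpret prob_space M by (rule P)
  have mconv: "borel_measurable M = borel_measurable borel" by (rule measurable_cong_sets[OF sM refl])
  define c where "c x = a x * dsg \<sigma> (b x * (v0 \<bullet> x)) * b x" for x
  have sig_m: "(\<lambda>t. sigmoid \<sigma> t) \<in> borel_measurable borel"
    unfolding sigmoid_def by measurable
  have dsg_m: "(\<lambda>t. dsg \<sigma> t) \<in> borel_measurable borel"
    unfolding dsg_def sigmoid_def by measurable
  have cm: "c \<in> borel_measurable borel"
    unfolding c_def using am(1) bm(1) dsg_m by measurable
  have cb: "\<bar>c x\<bar> \<le> 1 / (4 * \<sigma>)" for x
  proof -
    have "\<bar>c x\<bar> = \<bar>a x\<bar> * \<bar>dsg \<sigma> (b x * (v0 \<bullet> x))\<bar>" unfolding c_def using bm(2)[of x] by (simp add: abs_mult)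
    also have "\<dots> \<le> 1 * (1 / (4 * \<sigma>))"
      using am(2,3)[of x] dsg_nonneg[OF s] dsg_le[OF s] by (intro mult_mono) auto
    finally show ?thesis by simp
  qed
  have int_c: "integrable M (\<lambda>x. c x * (x \<bullet> h))" for h
  proof (rule Bochner_Integration.integrable_bound)
    show "integrable M (\<lambda>x. 1 / (4 * \<sigma>) * (x \<bullet> h))" using ii3[of h] by simp
    show "(\<lambda>x. c x * (x \<bullet> h)) \<in> borel_measurable M" unfolding mconv using cm by measurable
    show "AE x in M. norm (c x * (x \<bullet> h)) \<le> norm (1 / (4 * \<sigma>) * (x \<bullet> h))"
    proof (intro AE_I2)
      fix x
      have "\<bar>c x\<bar> * \<bar>x \<bullet> h\<bar> \<le> 1 / (4 * \<sigma>) * \<bar>x \<bullet> h\<bar>" using cb[of x] by (rule mult_right_mono) simp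
      thus "norm (c x * (x \<bullet> h)) \<le> norm (1 / (4 * \<sigma>) * (x \<bullet> h))" using s by (simp add: abs_mult)
    qed
  qed
  have lin: "(\<Sum>i\<in>Basis. (\<integral>x. c x * (x \<bullet> i) \<partial>M) *\<^sub>R i) \<bullet> h = (\<integral>x. c x * (x \<bullet> h) \<partial>M)" for h
  proof -
    have "(\<Sum>i\<in>Basis. (\<integral>x. c x * (x \<bullet> i) \<partial>M) *\<^sub>R i) \<bullet> h = (\<Sum>i\<in>Basis. (\<integral>x. c x * (x \<bullet> i) \<partial>M) * (i \<bullet> h))"
      by (simp add: inner_sum_left)
    also have "\<dots> = (\<Sum>i\<in>Basis. (\<integral>x. c x * (x \<bullet> i) * (i \<bullet> h) \<partial>M))" by simp
    also have "\<dots> = (\<integral>x. (\<Sum>i\<in>Basis. c x * (x \<bullet> i) * (i \<bullet> h)) \<partial>M)"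
      by (rule Bochner_Integration.integral_sum[of Basis M "\<lambda>i x. c x * (x \<bullet> i) * (i \<bullet> h)", symmetric]) (use int_c in simp)
    also have "\<dots> = (\<integral>x. c x * (x \<bullet> h) \<partial>M)"
    proof (rule Bochner_Integration.integral_cong[OF refl])
      fix x
      have "x \<bullet> h = (\<Sum>i\<in>Basis. (x \<bullet> i) * (h \<bullet> i))" by (rule euclidean_inner)
      thus "(\<Sum>i\<in>Basis. c x * (x \<bullet> i) * (i \<bullet> h)) = c x * (x \<bullet> h)"
        by (simp add: sum_distrib_left mult.assoc inner_commute)
    qed
    finally show ?thesis .
  qed
  show "(\<Sum>i\<in>Basis. (\<integral>x. a x * dsg \<sigma> (b x * (v0 \<bullet> x)) * b x * (x \<bullet> i) \<partial>M) *\<^sub>R i) \<bullet> h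
          = (\<integral>x. a x * dsg \<sigma> (b x * (v0 \<bullet> x)) * b x * (x \<bullet> h) \<partial>M)"
    using lin[of h] unfolding c_def .
  let ?F = "\<lambda>v. \<integral>x. a x * sigmoid \<sigma> (b x * (v \<bullet> x)) \<partial>M"
  have int_S: "integrable M (\<lambda>x. a x * sigmoid \<sigma> (b x * (v \<bullet> x)))" for v
  proof (rule integrable_const_bound[where B=1])
    show "AE x in M. norm (a x * sigmoid \<sigma> (b x * (v \<bullet> x))) \<le> 1"
    proof (intro AE_I2)
      fix x
      have "a x * sigmoid \<sigma> (b x * (v \<bullet> x)) \<le> 1 * 1"
        using am(2,3)[of x] sig_pos[of \<sigma>] sig_lt1[of \<sigma>] by (intro mult_mono) (auto intro: less_imp_le)
      thus "norm (a x * sigmoid \<sigma> (b x * (v \<bullet> x))) \<le> 1"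
        using am(2)[of x] sig_pos[of \<sigma> "b x * (v \<bullet> x)"] by simp
    qed
    show "(\<lambda>x. a x * sigmoid \<sigma> (b x * (v \<bullet> x))) \<in> borel_measurable M"
      unfolding mconv using am(1) bm(1) sig_m by measurable
  qed
  have "(?F has_derivative (\<lambda>h. (\<Sum>i\<in>Basis. (\<integral>x. c x * (x \<bullet> i) \<partial>M) *\<^sub>R i) \<bullet> h)) (at v0)"
  proof (rule quad_deriv[where K = "1 / \<sigma>^2"])
    show "bounded_linear (\<lambda>h. (\<Sum>i\<in>Basis. (\<integral>x. c x * (x \<bullet> i) \<partial>M) *\<^sub>R i) \<bullet> h)"
      by (rule bounded_linear_inner_right)
    fix v
    let ?d = "v - v0"
    have pw: "\<bar>a x * sigmoid \<sigma> (b x * (v \<bullet> x)) - a x * sigmoid \<sigma> (b x * (v0 \<bullet> x)) - c x * (x \<bullet> ?d)\<bar>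
        \<le> (x \<bullet> ?d) * (x \<bullet> ?d) / \<sigma>^2" for x
    proof -
      let ?A = "b x * (v0 \<bullet> x)" and ?B = "b x * (v \<bullet> x)"
      have BA: "?B - ?A = b x * (x \<bullet> ?d)" by (simp add: inner_diff_left inner_commute algebra_simps)
      have "a x * sigmoid \<sigma> ?B - a x * sigmoid \<sigma> ?A - c x * (x \<bullet> ?d)
          = a x * (sigmoid \<sigma> ?B - sigmoid \<sigma> ?A - dsg \<sigma> ?A * (?B - ?A))"
        unfolding BA c_def by (simp add: algebra_simps)
      hence "\<bar>a x * sigmoid \<sigma> ?B - a x * sigmoid \<sigma> ?A - c x * (x \<bullet> ?d)\<bar>
          = \<bar>a x\<bar> * \<bar>sigmoid \<sigma> ?B - sigmoid \<sigma> ?A - dsg \<sigma> ?A * (?B - ?A)\<bar>" by (simp add: abs_mult)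
      also have "\<dots> \<le> 1 * ((?B - ?A)^2 / \<sigma>^2)"
        using am(2,3)[of x] sig_taylor[OF s] by (intro mult_mono) auto
      also have "(?B - ?A)^2 = (x \<bullet> ?d) * (x \<bullet> ?d)"
      proof -
        have "(b x)^2 = 1" using bm(2)[of x] by (metis power2_abs power_one)
        hence "(b x * (x \<bullet> ?d))^2 = (x \<bullet> ?d)^2" by (simp only: power_mult_distrib mult_1)
        thus ?thesis unfolding BA by (simp only: power2_eq_square)
      qed
      finally show ?thesis by simp
    qed
    have "?F v - ?F v0 - (\<Sum>i\<in>Basis. (\<integral>x. c x * (x \<bullet> i) \<partial>M) *\<^sub>R i) \<bullet> ?d
        = (\<integral>x. a x * sigmoid \<sigma> (b x * (v \<bullet> x)) - a x * sigmoid \<sigma> (b x * (v0 \<bullet> x)) - c x * (x \<bullet> ?d) \<partial>M)"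
      unfolding lin using int_S int_c by simp
    hence "\<bar>?F v - ?F v0 - (\<Sum>i\<in>Basis. (\<integral>x. c x * (x \<bullet> i) \<partial>M) *\<^sub>R i) \<bullet> ?d\<bar>
        \<le> (\<integral>x. (x \<bullet> ?d) * (x \<bullet> ?d) / \<sigma>^2 \<partial>M)"
      using pw by (simp only:) (rule integral_abs_bound_integral, use int_S int_c ii1 in auto)
    also have "\<dots> = 1 / \<sigma>^2 * (norm ?d)^2"
      using ii2[of ?d] by (simp add: power2_norm_eq_inner)
    finally show "\<bar>?F v - ?F v0 - (\<Sum>i\<in>Basis. (\<integral>x. c x * (x \<bullet> i) \<partial>M) *\<^sub>R i) \<bullet> ?d\<bar> \<le> 1 / \<sigma>^2 * (norm ?d)^2" .
  qed
  thus "((\<lambda>v. \<integral>x. a x * sigmoid \<sigma> (b x * (v \<bullet> x)) \<partial>M) has_derivative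
          (\<lambda>h. (\<Sum>i\<in>Basis. (\<integral>x. a x * dsg \<sigma> (b x * (v0 \<bullet> x)) * b x * (x \<bullet> i) \<partial>M) *\<^sub>R i) \<bullet> h)) (at v0)"
    unfolding c_def .
qed



lemma normalize_deriv:
  fixes u :: "'a::real_inner" assumes u: "norm u = 1"
  shows "((\<lambda>w. (1 / norm w) *\<^sub>R w) has_derivative (\<lambda>h. h - (u \<bullet> h) *\<^sub>R u)) (at u)"
proof -
  have u0: "u \<noteq> 0" using u by auto
  have dn: "(norm has_derivative (\<lambda>h. h \<bullet> sgn u)) (at u)" by (rule has_derivative_norm[OF u0])
  have di: "((\<lambda>w. inverse (norm w)) has_derivative (\<lambda>h. - (inverse (norm u) * (h \<bullet> sgn u) * inverse (norm u)))) (at u)"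
    using Deriv.has_derivative_inverse[where f=norm and x=u, OF _ dn] u0 by simp
  have "((\<lambda>w. inverse (norm w) *\<^sub>R w) has_derivative
      (\<lambda>h. inverse (norm u) *\<^sub>R h + (- (inverse (norm u) * (h \<bullet> sgn u) * inverse (norm u))) *\<^sub>R u)) (at u)"
    by (rule has_derivative_scaleR[OF di has_derivative_ident])
  moreover have "(\<lambda>h. inverse (norm u) *\<^sub>R h + (- (inverse (norm u) * (h \<bullet> sgn u) * inverse (norm u))) *\<^sub>R u)
      = (\<lambda>h. h - (u \<bullet> h) *\<^sub>R u)"
    using u by (auto simp: sgn_div_norm inner_commute)
  ultimately show ?thesis by (simp add: divide_inverse)
qed



lemma dens_transfer:
  fixes Dx :: "'a measure" and \<pi> :: "'a \<Rightarrow> real \<times> real"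
  assumes \<pi>m: "\<pi> \<in> measurable Dx lborel"
  and dens: "distr Dx lborel \<pi> = density lborel (\<lambda>z. ennreal (\<gamma> z))"
  and \<gamma>m: "\<gamma> \<in> borel_measurable borel"
  and Pm: "P \<in> borel_measurable borel"
  shows "(\<integral>\<^sup>+x. ennreal (P (\<pi> x)) \<partial>Dx) = (\<integral>\<^sup>+z. ennreal (\<gamma> z) * ennreal (P z) \<partial>lborel)"
proof -
  have "(\<integral>\<^sup>+x. ennreal (P (\<pi> x)) \<partial>Dx) = (\<integral>\<^sup>+z. ennreal (P z) \<partial>distr Dx lborel \<pi>)"
    by (rule nn_integral_distr[symmetric, OF \<pi>m]) (use Pm in simp)
  also have "\<dots> = (\<integral>\<^sup>+z. ennreal (P z) \<partial>density lborel (\<lambda>z. ennreal (\<gamma> z)))" by (simp add: dens)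
  also have "\<dots> = (\<integral>\<^sup>+z. ennreal (\<gamma> z) * ennreal (P z) \<partial>lborel)"
    by (rule nn_integral_density) (use \<gamma>m Pm in auto)
  finally show ?thesis .
qed

lemma fubini_pair:
  fixes G :: "real \<times> real \<Rightarrow> ennreal"
  assumes "G \<in> borel_measurable borel"
  shows "(\<integral>\<^sup>+z. G z \<partial>lborel) = (\<integral>\<^sup>+z1. (\<integral>\<^sup>+z2. G (z1, z2) \<partial>lborel) \<partial>lborel)"
proof -
  have "(\<integral>\<^sup>+z. G z \<partial>lborel) = (\<integral>\<^sup>+z. G z \<partial>(lborel \<Otimes>\<^sub>M lborel))" by (simp add: lborel_prod)
  also have "\<dots> = (\<integral>\<^sup>+z1. (\<integral>\<^sup>+z2. G (z1, z2) \<partial>lborel) \<partial>lborel)"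
    by (rule lborel.nn_integral_fst[symmetric]) (use assms in \<open>simp add: lborel_prod\<close>)
  finally show ?thesis .
qed

lemma pos_part:
  fixes Dx :: "'a measure" and \<pi> :: "'a \<Rightarrow> real \<times> real"
  assumes \<pi>m: "\<pi> \<in> measurable Dx lborel"
  and dens: "distr Dx lborel \<pi> = density lborel (\<lambda>z. ennreal (\<gamma> z))"
  and \<gamma>m: "\<gamma> \<in> borel_measurable borel" and \<gamma>lo: "\<And>z. norm z \<le> R \<Longrightarrow> \<gamma> z \<ge> 1/U" and U: "U > 0"
  and Pm: "P \<in> borel_measurable borel" and Pnn: "\<And>z. 0 \<le> P z"
  and Plo: "\<And>z1 z2. \<bar>z1\<bar> \<le> \<sigma> \<Longrightarrow> R/4 \<le> \<bar>z2\<bar> \<Longrightarrow> \<bar>z2\<bar> \<le> 7*R/8 \<Longrightarrow> P (z1, z2) \<ge> B"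
  and \<sigma>: "0 < \<sigma>" "\<sigma> \<le> R/8" and B: "B \<ge> 0"
  shows "(\<integral>\<^sup>+x. ennreal (P (\<pi> x)) \<partial>Dx) \<ge> ennreal (B / U * (5*R/4) * (2*\<sigma>))"
proof -
  have R: "R > 0" using \<sigma> by simp
  define I1 where "I1 = {R/4 .. 7*R/8}"
  define I2 where "I2 = {-(7*R/8) .. -(R/4)}"
  define G where "G z = ennreal (B / U) * (indicator {-\<sigma>..\<sigma>} (fst z) * (indicator I1 (snd z) + indicator I2 (snd z)))" for z :: "real \<times> real"
  have Gm: "G \<in> borel_measurable borel" unfolding G_def I1_def I2_def borel_prod[symmetric] by measurable
  have "(\<integral>\<^sup>+z. G z \<partial>lborel) \<le> (\<integral>\<^sup>+z. ennreal (\<gamma> z) * ennreal (P z) \<partial>lborel)"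
  proof (rule nn_integral_mono)
    fix z :: "real \<times> real"
    obtain z1 z2 where z: "z = (z1, z2)" by (cases z)
    show "G z \<le> ennreal (\<gamma> z) * ennreal (P z)"
    proof (cases "\<bar>z1\<bar> \<le> \<sigma> \<and> R/4 \<le> \<bar>z2\<bar> \<and> \<bar>z2\<bar> \<le> 7*R/8")
      case True
      have "z1^2 \<le> (R/8)^2" using True \<sigma> by (metis abs_le_square_iff abs_of_nonneg dual_order.trans less_imp_le zero_le_divide_iff R order.refl zero_le_numeral)
      moreover have "z2^2 \<le> (7*R/8)^2" using True R by (metis abs_le_square_iff abs_of_nonneg less_imp_le zero_le_divide_iff zero_le_mult_iff zero_le_numeral)
      ultimately have "z1^2 \<le> R^2/64" "z2^2 \<le> 49*R^2/64" by (simp_all add: power_divide power_mult_distrib)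
      moreover have "0 \<le> R^2" by simp
      ultimately have "z1^2 + z2^2 \<le> R^2" by linarith
      hence "norm z \<le> R" unfolding z norm_Pair using R by (simp add: real_sqrt_le_iff real_le_lsqrt)
      hence g: "\<gamma> z \<ge> 1/U" by (rule \<gamma>lo)
      have "0 < 1/U" using U by simp
      hence g0: "0 \<le> \<gamma> z" using g by linarith
      have p: "P z \<ge> B" unfolding z using True by (intro Plo) auto
      have "B / U \<le> \<gamma> z * P z"
      proof -
        have "B / U = (1/U) * B" by simp
        also have "\<dots> \<le> \<gamma> z * P z" using g p B U g0 by (intro mult_mono) auto
        finally show ?thesis .
      qed
      moreover have "indicator {-\<sigma>..\<sigma>} (fst z) * (indicator I1 (snd z) + indicator I2 (snd z)) \<le> (1::ennreal)"
        unfolding z I1_def I2_def using R by (auto split: split_indicator)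
      ultimately have "G z \<le> ennreal (B / U) * 1" unfolding G_def by (intro mult_left_mono) auto
      also have "\<dots> \<le> ennreal (\<gamma> z * P z)" using \<open>B / U \<le> \<gamma> z * P z\<close> by (simp add: ennreal_leI)
      also have "\<dots> = ennreal (\<gamma> z) * ennreal (P z)" using Pnn[of z] g U by (intro ennreal_mult) (auto intro: order.trans[rotated])
      finally show ?thesis .
    next
      case False
      hence "G z = 0" unfolding G_def z I1_def I2_def by (auto split: split_indicator)
      thus ?thesis by simp
    qed
  qed
  also have "\<dots> = (\<integral>\<^sup>+x. ennreal (P (\<pi> x)) \<partial>Dx)" by (rule dens_transfer[symmetric, OF \<pi>m dens \<gamma>m Pm])
  finally have le: "(\<integral>\<^sup>+z. G z \<partial>lborel) \<le> (\<integral>\<^sup>+x. ennreal (P (\<pi> x)) \<partial>Dx)" .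
  have inner: "(\<integral>\<^sup>+z2. G (z1, z2) \<partial>lborel) = ennreal (B / U) * indicator {-\<sigma>..\<sigma>} z1 * ennreal (5*R/4)" for z1
  proof -
    have "(\<integral>\<^sup>+z2. G (z1, z2) \<partial>lborel) = (\<integral>\<^sup>+z2. (ennreal (B / U) * indicator {-\<sigma>..\<sigma>} z1) * (indicator I1 z2 + indicator I2 z2) \<partial>lborel)"
      unfolding G_def by (simp add: mult.assoc)
    also have "\<dots> = ennreal (B / U) * indicator {-\<sigma>..\<sigma>} z1 * (\<integral>\<^sup>+z2. indicator I1 z2 + indicator I2 z2 \<partial>lborel)"
      by (rule nn_integral_cmult) (simp add: I1_def I2_def)
    also have "(\<integral>\<^sup>+z2. indicator I1 z2 + indicator I2 z2 \<partial>lborel) = emeasure lborel I1 + emeasure lborel I2"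
      by (subst nn_integral_add) (auto simp: I1_def I2_def)
    also have "\<dots> = ennreal (5*R/8) + ennreal (5*R/8)" unfolding I1_def I2_def using R by simp
    also have "\<dots> = ennreal (5*R/4)" using R by (simp add: ennreal_plus[symmetric] del: ennreal_plus)
    finally show ?thesis .
  qed
  have "(\<integral>\<^sup>+z. G z \<partial>lborel) = (\<integral>\<^sup>+z1. ennreal (B / U) * indicator {-\<sigma>..\<sigma>} z1 * ennreal (5*R/4) \<partial>lborel)"
    unfolding fubini_pair[OF Gm] inner ..
  also have "\<dots> = (\<integral>\<^sup>+z1. ennreal (B / U * (5*R/4)) * indicator {-\<sigma>..\<sigma>} z1 \<partial>lborel)"
  proof (intro nn_integral_cong)
    fix x
    have e: "ennreal (B / U * (5*R/4)) = ennreal (B / U) * ennreal (5*R/4)" by (rule ennreal_mult) (use R B U in auto)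
    show "ennreal (B / U) * indicator {-\<sigma>..\<sigma>} x * ennreal (5*R/4) = ennreal (B / U * (5*R/4)) * indicator {-\<sigma>..\<sigma>} x"
      by (subst e) (simp only: mult_ac)
  qed
  also have "\<dots> = ennreal (B / U * (5*R/4)) * ennreal (2 * \<sigma>)"
    using \<sigma> by (subst nn_integral_cmult_indicator) auto
  also have "\<dots> = ennreal (B / U * (5*R/4) * (2*\<sigma>))" by (rule ennreal_mult[symmetric]) (use R B U \<sigma> in auto)
  finally show ?thesis using le by simp
qed

lemma neg_part:
  fixes Dx :: "'a measure" and \<pi> :: "'a \<Rightarrow> real \<times> real"
  assumes \<pi>m: "\<pi> \<in> measurable Dx lborel"
  and dens: "distr Dx lborel \<pi> = density lborel (\<lambda>z. ennreal (\<gamma> z))"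
  and \<gamma>m: "\<gamma> \<in> borel_measurable borel" and \<gamma>hi: "\<And>z. \<gamma> z \<le> U" and \<gamma>0: "\<And>z. 0 \<le> \<gamma> z"
  and Nm: "N \<in> borel_measurable borel" and Nnn: "\<And>z. 0 \<le> N z"
  and Nhi: "\<And>z1 z2. N (z1, z2) \<le> (if min 0 (m*z1) \<le> z2 \<and> z2 \<le> max 0 (m*z1) then dsg \<sigma> z1 * (\<bar>m\<bar> * \<bar>z1\<bar>) else 0)"
  and \<sigma>: "0 < \<sigma>"
  shows "(\<integral>\<^sup>+x. ennreal (N (\<pi> x)) \<partial>Dx) \<le> ennreal (U * m^2 * (4*\<sigma>^2))"
proof -
  have U: "0 \<le> U" using \<gamma>0[of 0] \<gamma>hi[of 0] by linarith
  define Hr where "Hr z = (if min 0 (m * fst z) \<le> snd z \<and> snd z \<le> max 0 (m * fst z) then dsg \<sigma> (fst z) * (\<bar>m\<bar> * \<bar>fst z\<bar>) else 0)" for z :: "real \<times> real"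
  have dsg_m: "(\<lambda>t. dsg \<sigma> t) \<in> borel_measurable borel"
    unfolding dsg_def sigmoid_def by measurable
  have Hm: "Hr \<in> borel_measurable borel" unfolding Hr_def borel_prod[symmetric] using dsg_m by measurable
  have Hnn: "0 \<le> Hr z" for z unfolding Hr_def using dsg_nonneg[OF \<sigma>] by simp
  have "(\<integral>\<^sup>+x. ennreal (N (\<pi> x)) \<partial>Dx) = (\<integral>\<^sup>+z. ennreal (\<gamma> z) * ennreal (N z) \<partial>lborel)"
    by (rule dens_transfer[OF \<pi>m dens \<gamma>m Nm])
  also have "\<dots> \<le> (\<integral>\<^sup>+z. ennreal U * ennreal (Hr z) \<partial>lborel)"
  proof (rule nn_integral_mono)
    fix z :: "real \<times> real"
    have "N z \<le> Hr z" unfolding Hr_def using Nhi[of "fst z" "snd z"] by simp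
    hence "\<gamma> z * N z \<le> U * Hr z" using \<gamma>hi[of z] \<gamma>0[of z] Nnn[of z] U by (intro mult_mono) auto
    hence "ennreal (\<gamma> z * N z) \<le> ennreal (U * Hr z)" by (rule ennreal_leI)
    thus "ennreal (\<gamma> z) * ennreal (N z) \<le> ennreal U * ennreal (Hr z)"
      using \<gamma>0[of z] Nnn[of z] U Hnn[of z] by (simp add: ennreal_mult)
  qed
  also have "\<dots> = ennreal U * (\<integral>\<^sup>+z. ennreal (Hr z) \<partial>lborel)"
    by (rule nn_integral_cmult) (use Hm in simp)
  also have "(\<integral>\<^sup>+z. ennreal (Hr z) \<partial>lborel) = (\<integral>\<^sup>+z1. (\<integral>\<^sup>+z2. ennreal (Hr (z1, z2)) \<partial>lborel) \<partial>lborel)"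
    by (rule fubini_pair) (use Hm in simp)
  also have "\<dots> \<le> (\<integral>\<^sup>+z1. ennreal (m^2) * ennreal (exp (- \<bar>z1\<bar> / \<sigma>) / \<sigma> * z1^2) \<partial>lborel)"
  proof (rule nn_integral_mono)
    fix z1 :: real
    let ?K = "dsg \<sigma> z1 * (\<bar>m\<bar> * \<bar>z1\<bar>)"
    have K0: "0 \<le> ?K" using dsg_nonneg[OF \<sigma>] by simp
    have "(\<integral>\<^sup>+z2. ennreal (Hr (z1, z2)) \<partial>lborel) = (\<integral>\<^sup>+z2. ennreal ?K * indicator {min 0 (m*z1) .. max 0 (m*z1)} z2 \<partial>lborel)"
      unfolding Hr_def by (intro nn_integral_cong) (auto split: split_indicator)
    also have "\<dots> = ennreal ?K * emeasure lborel {min 0 (m*z1) .. max 0 (m*z1)}"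
      by (rule nn_integral_cmult_indicator) simp
    also have "emeasure lborel {min 0 (m*z1) .. max 0 (m*z1)} = ennreal (\<bar>m\<bar> * \<bar>z1\<bar>)"
    proof -
      have "max 0 (m*z1) - min 0 (m*z1) = \<bar>m*z1\<bar>" by (auto simp: max_def min_def)
      thus ?thesis by (simp add: abs_mult)
    qed
    also have "ennreal ?K * ennreal (\<bar>m\<bar> * \<bar>z1\<bar>) = ennreal (?K * (\<bar>m\<bar> * \<bar>z1\<bar>))"
      by (rule ennreal_mult[symmetric]) (use K0 in auto)
    also have "?K * (\<bar>m\<bar> * \<bar>z1\<bar>) = dsg \<sigma> z1 * (m^2 * z1^2)"
      by (simp add: power2_eq_square abs_mult_self_eq mult_ac flip: abs_mult)
    also have "\<dots> \<le> ennreal (m^2 * (exp (- \<bar>z1\<bar> / \<sigma>) / \<sigma> * z1^2))"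
    proof (rule ennreal_leI)
      have "dsg \<sigma> z1 * (m^2 * z1^2) \<le> exp (- \<bar>z1\<bar> / \<sigma>) / \<sigma> * (m^2 * z1^2)"
        using dsg_upper[OF \<sigma>] by (rule mult_right_mono) simp
      thus "dsg \<sigma> z1 * (m^2 * z1^2) \<le> m^2 * (exp (- \<bar>z1\<bar> / \<sigma>) / \<sigma> * z1^2)" by (simp add: mult_ac)
    qed
    also have "\<dots> = ennreal (m^2) * ennreal (exp (- \<bar>z1\<bar> / \<sigma>) / \<sigma> * z1^2)"
      by (rule ennreal_mult) (use \<sigma> in auto)
    finally show "(\<integral>\<^sup>+z2. ennreal (Hr (z1, z2)) \<partial>lborel) \<le> ennreal (m^2) * ennreal (exp (- \<bar>z1\<bar> / \<sigma>) / \<sigma> * z1^2)" .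
  qed
  also have "\<dots> = ennreal (m^2) * (\<integral>\<^sup>+z1. ennreal (exp (- \<bar>z1\<bar> / \<sigma>) / \<sigma> * z1^2) \<partial>lborel)"
    by (rule nn_integral_cmult) measurable
  also have "\<dots> \<le> ennreal (m^2) * ennreal (4 * \<sigma>^2)"
    by (rule mult_left_mono[OF exp_sq_integral[OF \<sigma>]]) simp
  finally have "(\<integral>\<^sup>+x. ennreal (N (\<pi> x)) \<partial>Dx) \<le> ennreal U * (ennreal (m^2) * ennreal (4 * \<sigma>^2))"
    by (simp add: mult_left_mono)
  also have "\<dots> = ennreal (U * m^2 * (4*\<sigma>^2))" using U by (simp add: ennreal_mult mult.assoc)
  finally show ?thesis .
qed



theorem lemma3p3:
  fixes D :: "('a::euclidean_space \<times> real) measure" and Dx :: "'a measure"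
    and \<eta> U R \<theta> \<sigma> :: real and wstar what :: 'a
  assumes "0 \<le> \<eta>" and "\<eta> < 1/2"
    and "norm wstar = 1"
    and "massart D Dx (\<lambda>x. psign (wstar \<bullet> x)) \<eta>"
    and "0 < U" and "0 < R" and "UR_bounded Dx U R"
    and "0 < \<theta>" and "\<theta> < pi/2"
    and "norm what = 1"
    and "\<theta> < vec_angle what wstar" and "vec_angle what wstar < pi - \<theta>"
    and "0 < \<sigma>" and "\<sigma> \<le> R / (8 * U) * sqrt (1 - 2 * \<eta>) * sin \<theta>"
  shows "\<exists>g. (sigmoid_loss D \<sigma> has_derivative (\<lambda>h. g \<bullet> h)) (at what) \<and>
             norm g \<ge> R^2 * (1 - 2 * \<eta>) / (32 * U)"
proof -
  note \<eta>0 = assms(1) and \<eta>1 = assms(2) and ws = assms(3) and U0 = assms(5) and R0 = assms(6)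
  note \<theta>0 = assms(8) and \<theta>1 = assms(9) and wh = assms(10) and \<sigma>0 = assms(13) and \<sigma>1 = assms(14)
  define f where "f x = psign (wstar \<bullet> x)" for x
  have fpm: "f x = 1 \<or> f x = -1" for x unfolding f_def psign_def by auto
  have fabs: "\<bar>f x\<bar> = 1" for x using fpm[of x] by auto
  have fm: "f \<in> borel_measurable borel" unfolding f_def[abs_def] psign_def by measurable
  obtain e where PD: "prob_space D" and sD: "sets D = sets borel" and PDx: "prob_space Dx" and sDx: "sets Dx = sets borel"
    and em: "e \<in> borel_measurable borel" and e01: "\<And>x. 0 \<le> e x \<and> e x \<le> \<eta>"
    and eD: "\<And>A. A \<in> sets borel \<Longrightarrow> emeasure D A =
           (\<integral>\<^sup>+ x. ennreal ((1 - e x) * indicator A (x, f x) + e x * indicator A (x, - f x)) \<partial>Dx)"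
    using assms(4) unfolding massart_def f_def by blast
  have e0: "0 \<le> e x" and e1: "e x \<le> \<eta>" for x using e01[of x] by auto
  have ele1: "e x \<le> 1" for x using e1[of x] \<eta>1 by linarith
  interpret Dx: prob_space Dx by (rule PDx)
  interpret D: prob_space D by (rule PD)
  have mconv: "borel_measurable Dx = borel_measurable borel" by (rule measurable_cong_sets[OF sDx refl])
  have iso: "isotropic Dx" using assms(7) unfolding UR_bounded_def by blast
  have ii3: "\<And>v. integrable Dx (\<lambda>x. x \<bullet> v)" using iso unfolding isotropic_def by blast
  have ii1: "\<And>u v. integrable Dx (\<lambda>x. (x \<bullet> u) * (x \<bullet> v))" using iso unfolding isotropic_def by blast
  have ii2: "\<And>u. (\<integral>x. (x \<bullet> u) * (x \<bullet> u) \<partial>Dx) = u \<bullet> u" using iso unfolding isotropic_def by blast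
  have sig_m: "(\<lambda>t. sigmoid \<sigma> t) \<in> borel_measurable borel" unfolding sigmoid_def by measurable
  have dsg_m: "(\<lambda>t. dsg \<sigma> t) \<in> borel_measurable borel" unfolding dsg_def sigmoid_def by measurable

  define a where "a x = 1 - 2 * e x" for x
  define b where "b x = - f x" for x
  define N where "N w = (1 / norm w) *\<^sub>R w" for w :: 'a
  define \<Phi> where "\<Phi> v = (\<integral>x. a x * sigmoid \<sigma> (b x * (v \<bullet> x)) \<partial>Dx)" for v
  define C where "C = (\<integral>x. e x \<partial>Dx)"
  have am: "a \<in> borel_measurable borel" unfolding a_def[abs_def] using em by measurable
  have bm: "b \<in> borel_measurable borel" unfolding b_def[abs_def] using fm by measurable
  have a0: "0 \<le> a x" and a1: "a x \<le> 1" for x unfolding a_def using e0[of x] e1[of x] \<eta>1 by auto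
  have babs: "\<bar>b x\<bar> = 1" for x unfolding b_def using fabs[of x] by simp
  have loss: "sigmoid_loss D \<sigma> w = C + \<Phi> (N w)" for w
  proof -
    define g where "g p = sigmoid \<sigma> (- snd p * (w \<bullet> fst p) / norm w)" for p :: "'a \<times> real"
    have gm: "g \<in> borel_measurable borel" unfolding g_def[abs_def] borel_prod[symmetric] using sig_m by measurable
    have g01: "0 \<le> g p" "g p \<le> 1" for p unfolding g_def using sig_pos sig_lt1 by (auto intro: less_imp_le)
    define h where "h x = (1 - e x) * g (x, f x) + e x * g (x, - f x)" for x
    have hm: "h \<in> borel_measurable borel" unfolding h_def[abs_def] borel_prod[symmetric]
      using gm em fm unfolding borel_prod[symmetric] by measurable
    have h0: "0 \<le> h x" for x unfolding h_def using g01 e0[of x] e1[of x] \<eta>1 by (auto intro!: add_nonneg_nonneg mult_nonneg_nonneg)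
    have "sigmoid_loss D \<sigma> w = (\<integral>p. g p \<partial>D)" unfolding sigmoid_loss_def g_def ..
    also have "\<dots> = enn2real (\<integral>\<^sup>+p. ennreal (g p) \<partial>D)"
      by (rule integral_eq_nn_integral) (use gm g01 in \<open>auto simp: measurable_cong_sets[OF sD refl]\<close>)
    also have "(\<integral>\<^sup>+p. ennreal (g p) \<partial>D) = (\<integral>\<^sup>+x. ennreal (1 - e x) * ennreal (g (x, f x)) + ennreal (e x) * ennreal (g (x, - f x)) \<partial>Dx)"
      by (rule massart_nn[OF sD sDx eD em _ _ fm]) (use e0 ele1 gm in \<open>auto simp: measurable_cong_sets[OF sD refl]\<close>)
    also have "\<dots> = (\<integral>\<^sup>+x. ennreal (h x) \<partial>Dx)"
    proof (rule nn_integral_cong)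
      fix x
      have "1 - e x \<ge> 0" using e1[of x] \<eta>1 by simp
      thus "ennreal (1 - e x) * ennreal (g (x, f x)) + ennreal (e x) * ennreal (g (x, - f x)) = ennreal (h x)"
        unfolding h_def using g01 e0[of x] by (simp add: ennreal_mult ennreal_plus)
    qed
    also have "enn2real \<dots> = (\<integral>x. h x \<partial>Dx)"
      by (rule integral_eq_nn_integral[symmetric]) (use hm h0 in \<open>auto simp: mconv\<close>)
    also have "\<dots> = (\<integral>x. e x + a x * sigmoid \<sigma> (b x * (N w \<bullet> x)) \<partial>Dx)"
    proof (rule Bochner_Integration.integral_cong[OF refl])
      fix x
      have nw: "N w \<bullet> x = (w \<bullet> x) / norm w" unfolding N_def by simp
      have g1: "g (x, f x) = sigmoid \<sigma> (b x * (N w \<bullet> x))" unfolding g_def b_def nw by simp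
      have g2: "g (x, - f x) = 1 - sigmoid \<sigma> (b x * (N w \<bullet> x))"
        unfolding g_def b_def nw sig_neg[symmetric] by simp
      show "h x = e x + a x * sigmoid \<sigma> (b x * (N w \<bullet> x))" unfolding h_def g1 g2 a_def by (simp add: algebra_simps)
    qed
    also have "\<dots> = C + \<Phi> (N w)" unfolding C_def \<Phi>_def
    proof (rule Bochner_Integration.integral_add)
      show "integrable Dx e"
        by (rule Dx.integrable_const_bound[where B=\<eta>]) (use e0 e1 em in \<open>auto simp: mconv\<close>)
      show "integrable Dx (\<lambda>x. a x * sigmoid \<sigma> (b x * (N w \<bullet> x)))"
      proof (rule Dx.integrable_const_bound[where B=1])
        show "AE x in Dx. norm (a x * sigmoid \<sigma> (b x * (N w \<bullet> x))) \<le> 1"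
        proof (intro AE_I2)
          fix x
          have "a x * sigmoid \<sigma> (b x * (N w \<bullet> x)) \<le> 1 * 1"
            using a0[of x] a1[of x] sig_pos[of \<sigma>] sig_lt1[of \<sigma>] by (intro mult_mono) (auto intro: less_imp_le)
          thus "norm (a x * sigmoid \<sigma> (b x * (N w \<bullet> x))) \<le> 1"
            using a0[of x] sig_pos[of \<sigma> "b x * (N w \<bullet> x)"] by simp
        qed
        show "(\<lambda>x. a x * sigmoid \<sigma> (b x * (N w \<bullet> x))) \<in> borel_measurable Dx"
          unfolding mconv using am bm sig_m by measurable
      qed
    qed
    finally show ?thesis .
  qed
  have Nwh: "N what = what" unfolding N_def using wh by simp
  define G where "G = (\<Sum>i\<in>Basis. (\<integral>x. a x * dsg \<sigma> (b x * (what \<bullet> x)) * b x * (x \<bullet> i) \<partial>Dx) *\<^sub>R i)"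
  note PD = Phi_deriv[OF PDx sDx ii1 ii2 ii3 am a0 a1 bm babs \<sigma>0, of what]
  have dPhi: "(\<Phi> has_derivative (\<lambda>h. G \<bullet> h)) (at what)"
    using PD(1) unfolding \<Phi>_def[abs_def] G_def .
  have Gh: "G \<bullet> h = (\<integral>x. a x * dsg \<sigma> (b x * (what \<bullet> x)) * b x * (x \<bullet> h) \<partial>Dx)" for h
    using PD(2) unfolding G_def .
  have dN: "(N has_derivative (\<lambda>h. h - (what \<bullet> h) *\<^sub>R what)) (at what)"
    using normalize_deriv[OF wh] unfolding N_def[abs_def] .
  have dcomp: "((\<lambda>w. \<Phi> (N w)) has_derivative (\<lambda>h. G \<bullet> (h - (what \<bullet> h) *\<^sub>R what))) (at what)"
    using has_derivative_compose[OF dN, of \<Phi> "\<lambda>h. G \<bullet> h"] dPhi Nwh by simp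
  define g where "g = G - (G \<bullet> what) *\<^sub>R what"
  have dL: "(sigmoid_loss D \<sigma> has_derivative (\<lambda>h. g \<bullet> h)) (at what)"
  proof -
    have "((\<lambda>w. \<Phi> (N w) + C) has_derivative (\<lambda>h. G \<bullet> (h - (what \<bullet> h) *\<^sub>R what))) (at what)"
      by (rule has_derivative_add_const[OF dcomp])
    moreover have "sigmoid_loss D \<sigma> = (\<lambda>w. \<Phi> (N w) + C)" using loss by (auto simp: add.commute)
    moreover have "(\<lambda>h. G \<bullet> (h - (what \<bullet> h) *\<^sub>R what)) = (\<lambda>h. g \<bullet> h)"
      unfolding g_def by (auto simp: inner_diff_left inner_diff_right inner_commute)
    ultimately show ?thesis by simp
  qed
  define c0 where "c0 = what \<bullet> wstar"
  have c0b: "\<bar>c0\<bar> \<le> 1" unfolding c0_def using Cauchy_Schwarz_ineq2[of what wstar] wh ws by simp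
  have ang: "vec_angle what wstar = arccos c0" unfolding vec_angle_def c0_def using wh ws by simp
  have ac0: "0 \<le> arccos c0" "arccos c0 \<le> pi" using c0b arccos_lbound arccos_ubound by auto
  have cth: "0 < cos \<theta>" using \<theta>0 \<theta>1 by (intro cos_gt_zero) auto
  have sth: "0 < sin \<theta>" using \<theta>0 \<theta>1 by (intro sin_gt_zero) auto
  have "cos (arccos c0) < cos \<theta>" using assms(11) ang ac0 \<theta>0 by (intro cos_monotone_0_pi) auto
  hence c0u: "c0 < cos \<theta>" using c0b by simp
  have "cos (pi - \<theta>) < cos (arccos c0)" using assms(12) ang ac0 \<theta>0 by (intro cos_monotone_0_pi) auto
  hence c0l: "- cos \<theta> < c0" using c0b by simp
  have "\<bar>c0\<bar> < cos \<theta>" using c0u c0l by auto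
  hence c0sq: "c0^2 < (cos \<theta>)^2" by (metis abs_ge_zero power2_abs power_strict_mono zero_less_numeral)
  have sc: "(sin \<theta>)^2 = 1 - (cos \<theta>)^2" using sin_cos_squared_add[of \<theta>] by linarith
  define s0 where "s0 = sqrt (1 - c0^2)"
  have s0sq: "s0^2 = 1 - c0^2" unfolding s0_def using c0sq sc by (intro real_sqrt_pow2) (smt (verit) zero_le_power2)
  have s0pos: "0 < s0" unfolding s0_def using c0sq sc by (smt (verit) real_sqrt_gt_zero zero_le_power2)
  have s0sin: "sin \<theta> \<le> s0" unfolding s0_def using c0sq sc by (intro real_le_rsqrt) linarith
  define e2 where "e2 = (1 / s0) *\<^sub>R (wstar - c0 *\<^sub>R what)"
  have ww: "what \<bullet> what = 1" using wh by (simp add: dot_square_norm)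
  have wsws: "wstar \<bullet> wstar = 1" using ws by (simp add: dot_square_norm)
  have ws_dec: "wstar = c0 *\<^sub>R what + s0 *\<^sub>R e2" unfolding e2_def using s0pos by simp
  have we2: "what \<bullet> e2 = 0" unfolding e2_def using ww by (simp add: inner_diff_right c0_def)
  have "(wstar - c0 *\<^sub>R what) \<bullet> (wstar - c0 *\<^sub>R what) = 1 - c0^2"
    using ww wsws by (simp add: inner_diff_left inner_diff_right inner_commute c0_def[symmetric] power2_eq_square)
  hence "e2 \<bullet> e2 = 1" unfolding e2_def using s0sq s0pos by (simp add: power2_eq_square) (smt (verit) mult_pos_pos[OF s0pos s0pos])
  hence e2n: "norm e2 = 1" by (simp add: norm_eq_sqrt_inner)
  have wsx: "wstar \<bullet> x = c0 * (what \<bullet> x) + s0 * (e2 \<bullet> x)" for x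
    by (subst ws_dec) (simp add: inner_add_left)
  obtain \<gamma> :: "real \<times> real \<Rightarrow> real" where \<gamma>m: "\<gamma> \<in> borel_measurable borel"
    and dens: "distr Dx lborel (\<lambda>x. (x \<bullet> what, x \<bullet> e2)) = density lborel (\<lambda>z. ennreal (\<gamma> z))"
    and \<gamma>lo: "\<And>z. norm z \<le> R \<Longrightarrow> \<gamma> z \<ge> 1 / U" and \<gamma>b: "\<And>z. 0 \<le> \<gamma> z \<and> \<gamma> z \<le> U"
    using assms(7) wh e2n we2 unfolding UR_bounded_def by blast
  have U1: "1 \<le> U"
  proof -
    have "1 / U \<le> U" using \<gamma>lo[of 0] \<gamma>b[of 0] R0 by simp
    hence "1 \<le> U * U" using U0 by (simp add: divide_le_eq)
    thus ?thesis using U0 by (metis less_le_not_le mult_less_cancel_right1 not_le_imp_less order.trans mult_le_cancel_right1)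
  qed
  define \<pi> where "\<pi> x = (x \<bullet> what, x \<bullet> e2)" for x
  have \<pi>m: "\<pi> \<in> measurable Dx lborel"
    unfolding measurable_cong_sets[OF sDx sets_lborel] \<pi>_def borel_prod[symmetric] by measurable
  define Q where "Q z = psign (c0 * fst z + s0 * snd z) * dsg \<sigma> (fst z) * snd z" for z :: "real \<times> real"
  define P where "P z = max (Q z) 0" for z
  define Nn where "Nn z = max (- Q z) 0" for z
  have Qm: "Q \<in> borel_measurable borel" unfolding Q_def[abs_def] psign_def borel_prod[symmetric] using dsg_m by measurable
  have Pm: "P \<in> borel_measurable borel" unfolding P_def[abs_def] using Qm by measurable
  have Nnm: "Nn \<in> borel_measurable borel" unfolding Nn_def[abs_def] using Qm by measurable
  have Qb: "\<bar>Q z\<bar> \<le> 1 / (4 * \<sigma>) * \<bar>snd z\<bar>" for z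
  proof -
    have "\<bar>Q z\<bar> = dsg \<sigma> (fst z) * \<bar>snd z\<bar>" unfolding Q_def psign_def using dsg_nonneg[OF \<sigma>0] by (simp add: abs_mult)
    also have "\<dots> \<le> 1 / (4 * \<sigma>) * \<bar>snd z\<bar>" using dsg_le[OF \<sigma>0] by (rule mult_right_mono) simp
    finally show ?thesis .
  qed
  have int_bd: "integrable Dx \<phi>" if "\<phi> \<in> borel_measurable borel" "\<And>x. \<bar>\<phi> x\<bar> \<le> 1 / (4 * \<sigma>) * \<bar>x \<bullet> e2\<bar>" for \<phi>
  proof (rule Bochner_Integration.integrable_bound)
    show "integrable Dx (\<lambda>x. 1 / (4 * \<sigma>) * (x \<bullet> e2))" using ii3[of e2] by simp
    show "\<phi> \<in> borel_measurable Dx" using that(1) by (simp add: mconv)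
    show "AE x in Dx. norm (\<phi> x) \<le> norm (1 / (4 * \<sigma>) * (x \<bullet> e2))"
      using that(2) \<sigma>0 by (intro AE_I2) (simp add: abs_mult)
  qed
  have \<pi>mb: "\<pi> \<in> borel_measurable borel"
    unfolding \<pi>_def borel_prod[symmetric] by measurable
  have iQ: "integrable Dx (\<lambda>x. a x * Q (\<pi> x))"
  proof (rule int_bd)
    show "(\<lambda>x. a x * Q (\<pi> x)) \<in> borel_measurable borel" using am Qm \<pi>mb by measurable
    fix x
    have "\<bar>a x * Q (\<pi> x)\<bar> \<le> 1 * \<bar>Q (\<pi> x)\<bar>" unfolding abs_mult using a0[of x] a1[of x] by (intro mult_right_mono) auto
    also have "\<dots> \<le> 1 / (4 * \<sigma>) * \<bar>x \<bullet> e2\<bar>" using Qb[of "\<pi> x"] unfolding \<pi>_def by simp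
    finally show "\<bar>a x * Q (\<pi> x)\<bar> \<le> 1 / (4 * \<sigma>) * \<bar>x \<bullet> e2\<bar>" .
  qed
  have iP: "integrable Dx (\<lambda>x. P (\<pi> x))"
  proof (rule int_bd)
    show "(\<lambda>x. P (\<pi> x)) \<in> borel_measurable borel" using Pm \<pi>mb by measurable
    fix x show "\<bar>P (\<pi> x)\<bar> \<le> 1 / (4 * \<sigma>) * \<bar>x \<bullet> e2\<bar>" using Qb[of "\<pi> x"] unfolding P_def \<pi>_def by auto
  qed
  have iN: "integrable Dx (\<lambda>x. Nn (\<pi> x))"
  proof (rule int_bd)
    show "(\<lambda>x. Nn (\<pi> x)) \<in> borel_measurable borel" using Nnm \<pi>mb by measurable
    fix x show "\<bar>Nn (\<pi> x)\<bar> \<le> 1 / (4 * \<sigma>) * \<bar>x \<bullet> e2\<bar>" using Qb[of "\<pi> x"] unfolding Nn_def \<pi>_def by auto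
  qed
  have integrand: "a x * dsg \<sigma> (b x * (what \<bullet> x)) * b x * (x \<bullet> e2) = - (a x * Q (\<pi> x))" for x
  proof -
    have fx: "f x = psign (c0 * (x \<bullet> what) + s0 * (x \<bullet> e2))"
      unfolding f_def wsx inner_commute[of what x] inner_commute[of e2 x] ..
    have wx: "what \<bullet> x = x \<bullet> what" by (rule inner_commute)
    show ?thesis
    proof (cases "f x = 1")
      case True
      hence "psign (c0 * (x \<bullet> what) + s0 * (x \<bullet> e2)) = 1" using fx by simp
      thus ?thesis unfolding Q_def \<pi>_def b_def wx using True dsg_even by simp
    next
      case False
      hence F: "f x = -1" using fpm by blast
      hence "psign (c0 * (x \<bullet> what) + s0 * (x \<bullet> e2)) = -1" using fx by simp
      thus ?thesis unfolding Q_def \<pi>_def b_def wx using F by simp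
    qed
  qed
  have ge2: "g \<bullet> e2 = - (\<integral>x. a x * Q (\<pi> x) \<partial>Dx)"
  proof -
    have "g \<bullet> e2 = G \<bullet> e2" unfolding g_def using we2 by (simp add: inner_diff_left)
    also have "\<dots> = (\<integral>x. - (a x * Q (\<pi> x)) \<partial>Dx)" unfolding Gh integrand ..
    also have "\<dots> = - (\<integral>x. a x * Q (\<pi> x) \<partial>Dx)" by simp
    finally show ?thesis .
  qed
  have pw: "(1 - 2 * \<eta>) * P (\<pi> x) - Nn (\<pi> x) \<le> a x * Q (\<pi> x)" for x
  proof (cases "Q (\<pi> x) \<ge> 0")
    case True
    have "a x \<ge> 1 - 2 * \<eta>" unfolding a_def using e1[of x] by simp
    hence "(1 - 2 * \<eta>) * Q (\<pi> x) \<le> a x * Q (\<pi> x)" using True by (intro mult_right_mono)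
    thus ?thesis unfolding P_def Nn_def using True by simp
  next
    case False
    have "1 * Q (\<pi> x) \<le> a x * Q (\<pi> x)" using False a1[of x] by (intro mult_right_mono_neg) auto
    thus ?thesis unfolding P_def Nn_def using False by simp
  qed
  have lowI: "(1 - 2 * \<eta>) * (\<integral>x. P (\<pi> x) \<partial>Dx) - (\<integral>x. Nn (\<pi> x) \<partial>Dx) \<le> (\<integral>x. a x * Q (\<pi> x) \<partial>Dx)"
  proof -
    have "(\<integral>x. (1 - 2 * \<eta>) * P (\<pi> x) - Nn (\<pi> x) \<partial>Dx) \<le> (\<integral>x. a x * Q (\<pi> x) \<partial>Dx)"
      using iP iN iQ pw by (intro integral_mono) auto
    thus ?thesis using iP iN by simp
  qed
  have sq: "0 \<le> sqrt (1 - 2 * \<eta>)" "sqrt (1 - 2 * \<eta>) \<le> 1" using \<eta>0 \<eta>1 by auto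
  have RU: "R / (8 * U) \<le> R / 8" using U1 R0 by (intro divide_left_mono) auto
  have "R / (8 * U) * sqrt (1 - 2 * \<eta>) * sin \<theta> \<le> R / 8 * 1 * sin \<theta>"
    using RU sq sth R0 U0 by (intro mult_mono) auto
  from order.trans[OF \<sigma>1 this] have \<sigma>s: "\<sigma> \<le> R / 8 * sin \<theta>" by simp
  have "R / 8 * sin \<theta> \<le> R / 8 * 1" using R0 by (intro mult_left_mono) auto
  hence \<sigma>R8: "\<sigma> \<le> R / 8" using \<sigma>s by linarith
  have "R / 8 * sin \<theta> \<le> R / 8 * s0" using R0 s0sin by (intro mult_left_mono) auto
  hence \<sigma>s0: "8 * \<sigma> \<le> R * s0" using \<sigma>s by linarith
  define k0 where "k0 = 1 / (\<sigma> * (261/50))"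
  have k0pos: "0 \<le> k0" unfolding k0_def using \<sigma>0 by simp
  have Plo: "P (z1, z2) \<ge> R/4 * k0" if h: "\<bar>z1\<bar> \<le> \<sigma>" "R/4 \<le> \<bar>z2\<bar>" "\<bar>z2\<bar> \<le> 7*R/8" for z1 z2
  proof -
    have k: "dsg \<sigma> z1 \<ge> k0" unfolding k0_def by (rule dsg_lower[OF \<sigma>0 h(1)])
    have "\<bar>c0 * z1\<bar> \<le> 1 * \<sigma>" unfolding abs_mult using c0b h(1) by (intro mult_mono) auto
    hence cz: "- \<sigma> \<le> c0 * z1" "c0 * z1 \<le> \<sigma>" by auto
    have s0z: "2 * \<sigma> \<le> s0 * (R/4)" using \<sigma>s0 by (simp add: mult.commute)
    have "Q (z1, z2) \<ge> k0 * (R/4)"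
    proof (cases "z2 \<ge> 0")
      case True
      hence z2: "R/4 \<le> z2" using h(2) by simp
      have "s0 * (R/4) \<le> s0 * z2" using z2 s0pos by (intro mult_left_mono) auto
      hence "0 \<le> c0 * z1 + s0 * z2" using cz s0z by linarith
      hence "Q (z1, z2) = dsg \<sigma> z1 * z2" unfolding Q_def psign_def by simp
      also have "\<dots> \<ge> k0 * (R/4)" using k z2 k0pos R0 by (intro mult_mono) auto
      finally show ?thesis .
    next
      case False
      hence z2: "R/4 \<le> - z2" using h(2) by simp
      have "s0 * (R/4) \<le> s0 * (- z2)" using z2 s0pos by (intro mult_left_mono) auto
      hence "\<not> 0 \<le> c0 * z1 + s0 * z2" using cz s0z \<sigma>0 by (simp add: algebra_simps)
      hence "Q (z1, z2) = dsg \<sigma> z1 * (- z2)" unfolding Q_def psign_def by simp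
      also have "\<dots> \<ge> k0 * (R/4)" using k z2 k0pos R0 by (intro mult_mono) auto
      finally show ?thesis .
    qed
    thus ?thesis unfolding P_def by (simp add: mult.commute)
  qed
  define m where "m = - c0 / s0"
  have sm: "s0 * (m * z1) = - (c0 * z1)" for z1 unfolding m_def using s0pos by simp
  have Nhi: "Nn (z1, z2) \<le> (if min 0 (m*z1) \<le> z2 \<and> z2 \<le> max 0 (m*z1) then dsg \<sigma> z1 * (\<bar>m\<bar> * \<bar>z1\<bar>) else 0)" for z1 z2
  proof -
    let ?d = "dsg \<sigma> z1"
    have d0: "0 \<le> ?d" by (rule dsg_nonneg[OF \<sigma>0])
    have mz: "\<bar>m * z1\<bar> = \<bar>m\<bar> * \<bar>z1\<bar>" by (simp add: abs_mult)
    show ?thesis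
    proof (cases "Q (z1, z2) \<ge> 0")
      case True
      hence "Nn (z1, z2) = 0" unfolding Nn_def by simp
      thus ?thesis using d0 by simp
    next
      case Qn: False
      show ?thesis
      proof (cases "0 \<le> c0 * z1 + s0 * z2")
        case True
        hence Qe: "Q (z1, z2) = ?d * z2" unfolding Q_def psign_def by simp
        have z2n: "z2 < 0" using Qn Qe d0 by (metis mult_nonneg_nonneg not_le)
        have "s0 * (m * z1) \<le> s0 * z2" using True sm[of z1] by simp
        hence mz2: "m * z1 \<le> z2" using s0pos by simp
        have "Nn (z1, z2) = ?d * (- z2)" unfolding Nn_def using Qn Qe by simp
        also have "\<dots> \<le> ?d * \<bar>m * z1\<bar>" using d0 mz2 z2n by (intro mult_left_mono) auto
        finally show ?thesis using mz2 z2n unfolding mz by auto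
      next
        case False
        hence Qe: "Q (z1, z2) = - (?d * z2)" unfolding Q_def psign_def by simp
        have z2p: "z2 > 0"
        proof (rule ccontr)
          assume "\<not> 0 < z2"
          hence "?d * z2 \<le> 0" using d0 by (simp add: mult_nonneg_nonpos)
          thus False using Qn Qe by simp
        qed
        have "s0 * z2 < s0 * (m * z1)" using False sm[of z1] by simp
        hence mz2: "z2 < m * z1" using s0pos by simp
        have "Nn (z1, z2) = ?d * z2" unfolding Nn_def using Qn Qe by simp
        also have "\<dots> \<le> ?d * \<bar>m * z1\<bar>" using d0 mz2 z2p by (intro mult_left_mono) auto
        finally show ?thesis using mz2 z2p unfolding mz by auto
      qed
    qed
  qed
  have dens': "distr Dx lborel \<pi> = density lborel (\<lambda>z. ennreal (\<gamma> z))" unfolding \<pi>_def[abs_def] by (rule dens)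
  have Pnn: "0 \<le> P z" for z unfolding P_def by simp
  have Nnn: "0 \<le> Nn z" for z unfolding Nn_def by simp
  have posI: "R/4 * k0 / U * (5*R/4) * (2*\<sigma>) \<le> (\<integral>x. P (\<pi> x) \<partial>Dx)"
  proof -
    have "ennreal (R/4 * k0 / U * (5*R/4) * (2*\<sigma>)) \<le> (\<integral>\<^sup>+x. ennreal (P (\<pi> x)) \<partial>Dx)"
      by (rule pos_part[OF \<pi>m dens' \<gamma>m \<gamma>lo U0 Pm Pnn Plo \<sigma>0 \<sigma>R8]) (use k0pos R0 in auto)
    also have "\<dots> = ennreal (\<integral>x. P (\<pi> x) \<partial>Dx)"
      by (rule nn_integral_eq_integral[OF iP]) (simp add: Pnn)
    moreover have "0 \<le> (\<integral>x. P (\<pi> x) \<partial>Dx)" using Pnn by (intro Bochner_Integration.integral_nonneg) auto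
    ultimately show ?thesis by simp
  qed
  have negI: "(\<integral>x. Nn (\<pi> x) \<partial>Dx) \<le> U * m^2 * (4*\<sigma>^2)"
  proof -
    have "ennreal (\<integral>x. Nn (\<pi> x) \<partial>Dx) = (\<integral>\<^sup>+x. ennreal (Nn (\<pi> x)) \<partial>Dx)"
      by (rule nn_integral_eq_integral[OF iN, symmetric]) (simp add: Nnn)
    also have "\<dots> \<le> ennreal (U * m^2 * (4*\<sigma>^2))"
      by (rule neg_part[OF \<pi>m dens' \<gamma>m _ _ Nnm Nnn Nhi \<sigma>0]) (use \<gamma>b in auto)
    finally show ?thesis using U0 by simp
  qed
  define T where "T = R^2 * (1 - 2 * \<eta>) / U"
  have T0: "0 \<le> T" unfolding T_def using \<eta>1 U0 by simp
  have eqB: "R/4 * k0 / U * (5*R/4) * (2*\<sigma>) = R^2 / U * (125/1044)"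
    unfolding k0_def using \<sigma>0 U0 by (simp add: field_simps power2_eq_square)
  have sin2: "0 < (sin \<theta>)^2" using sth by simp
  have s0sq_ge: "(sin \<theta>)^2 \<le> s0^2" using s0sin sth by (intro power_mono) auto
  have c02: "c0^2 \<le> 1" using abs_le_square_iff[of c0 1] c0b by simp
  have m2: "m^2 \<le> 1 / (sin \<theta>)^2"
  proof -
    have "m^2 = c0^2 / s0^2" unfolding m_def by (simp add: power_divide)
    also have "\<dots> \<le> 1 / s0^2" using c02 by (intro divide_right_mono) auto
    also have "\<dots> \<le> 1 / (sin \<theta>)^2" using s0sq_ge sin2 s0pos by (intro divide_left_mono) auto
    finally show ?thesis .
  qed
  define X where "X = R / (8 * U) * sqrt (1 - 2 * \<eta>) * sin \<theta>"
  have X2: "X^2 = (R / (8 * U))^2 * (1 - 2 * \<eta>) * (sin \<theta>)^2"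
  proof -
    have h: "0 \<le> 1 - 2 * \<eta>" using \<eta>1 by simp
    show ?thesis by (simp only: X_def power_mult_distrib real_sqrt_pow2[OF h])
  qed
  have \<sigma>2: "\<sigma>^2 \<le> X^2" unfolding X_def using \<sigma>1 \<sigma>0 by (intro power_mono) auto
  have m\<sigma>: "m^2 * \<sigma>^2 \<le> (R / (8 * U))^2 * (1 - 2 * \<eta>)"
  proof -
    have "m^2 * \<sigma>^2 \<le> (1 / (sin \<theta>)^2) * X^2" using m2 \<sigma>2 by (intro mult_mono) auto
    also have "\<dots> = (R / (8 * U))^2 * (1 - 2 * \<eta>)" unfolding X2
    proof -
      have hh: "\<And>A s :: real. s \<noteq> 0 \<Longrightarrow> 1 / s * (A * s) = A" by simp
      show "1 / (sin \<theta>)^2 * ((R / (8 * U))^2 * (1 - 2 * \<eta>) * (sin \<theta>)^2) = (R / (8 * U))^2 * (1 - 2 * \<eta>)"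
        by (rule hh) (use sin2 in simp)
    qed
    finally show ?thesis .
  qed
  have negB: "U * m^2 * (4*\<sigma>^2) \<le> T / 16"
  proof -
    have "U * m^2 * (4*\<sigma>^2) = 4 * U * (m^2 * \<sigma>^2)" by (simp add: mult_ac)
    also have "\<dots> \<le> 4 * U * ((R / (8 * U))^2 * (1 - 2 * \<eta>))" using m\<sigma> U0 by (intro mult_left_mono) auto
    also have "\<dots> = T / 16" unfolding T_def using U0 by (simp add: field_simps power2_eq_square)
    finally show ?thesis .
  qed
  have eT: "(1 - 2 * \<eta>) * (R^2 / U * (125/1044)) = T * (125/1044)" unfolding T_def by simp
  have "(1 - 2 * \<eta>) * (R^2 / U * (125/1044)) \<le> (1 - 2 * \<eta>) * (\<integral>x. P (\<pi> x) \<partial>Dx)"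
    using posI eqB \<eta>1 by (intro mult_left_mono) auto
  hence A: "T * (125/1044) \<le> (1 - 2 * \<eta>) * (\<integral>x. P (\<pi> x) \<partial>Dx)" unfolding eT .
  have B: "(\<integral>x. Nn (\<pi> x) \<partial>Dx) \<le> T / 16" using negI negB by (rule order.trans)
  have "T * (125/1044) - T / 16 \<le> (1 - 2 * \<eta>) * (\<integral>x. P (\<pi> x) \<partial>Dx) - (\<integral>x. Nn (\<pi> x) \<partial>Dx)"
    using A B by (rule diff_mono)
  hence "T * (125/1044) - T / 16 \<le> (\<integral>x. a x * Q (\<pi> x) \<partial>Dx)" using lowI by (rule order.trans)
  moreover have "T / 32 \<le> T * (125/1044) - T / 16" using T0 by simp
  ultimately have main: "T / 32 \<le> - (g \<bullet> e2)" unfolding ge2 by linarith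
  have "\<bar>g \<bullet> e2\<bar> \<le> norm g" using Cauchy_Schwarz_ineq2[of g e2] e2n by simp
  hence "T / 32 \<le> norm g" using main by linarith
  moreover have "T / 32 = R^2 * (1 - 2 * \<eta>) / (32 * U)" unfolding T_def by simp
  ultimately show ?thesis using dL by auto
qed


end
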